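(* Let $f$ and $\varepsilon_0$ be as in the context and let $0<\alpha<\beta$. Let $(\mu_n)$ be a sequence of $\mathcal F$-invariant probability measures on $\Omega_{\varepsilon_0}\times M$ converging in the weak* topology to $\mu$, and suppose that for $\mu$-a.e. $(\underline\omega,x)$ $$\lim_{n\to+\infty}\frac1n\log\|Df^{n}_{\underline\omega}|_{E^{cs}(\underline\omega,x)}\|<-\beta,\qquad \lim_{n\to+\infty}\frac1n\log\|Df^{-n}_{\underline\omega}|_{E^{cu}(\underline\omega,x)}\|<-\beta .$$ Then $$\lim_{\ell\to+\infty}\liminf_{n\to+\infty}\mu_n(\mathcal B_\ell(\alpha))=1 .$$
   Context: $M$ compact Riemannian manifold, $f$ a $C^2$ diffeomorphism with dominated splitting $TM=E^{cu}\oplus_{\succ}E^{cs}$, with a regular random perturbation (continuous $\omega\mapsto f_\omega\in\mathrm{Diff}^2(M)$ on a metric space $\mathcal T$, $f_{\omega_f}=f$, probabilities $\theta_\varepsilon$ on $\mathcal T$ with nested compact supports shrinking to $\{\omega_f\}$ and absolutely continuous transition probabilities). $\Omega_\varepsilon=\mathrm{supp}(\theta_\varepsilon^{\mathbb Z})$; $\mathcal F(\underline\omega,x)=(\sigma\underline\omega,f_{\omega_0}(x))$, $\sigma$ the left shift; $f^n_{\underline\omega}$ the fibre compositions ($f_{\omega_{n-1}}\circ\cdots\circ f_{\omega_0}$ for $n>0$, $f_{\omega_n}^{-1}\circ\cdots\circ f_{\omega_{-1}}^{-1}$ for $n<0$). There is $\varepsilon_0>0$ and a continuous $\mathcal F$-invariant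 splitting $T_xM=E^{cu}(\underline\omega,x)\oplus E^{cs}(\underline\omega,x)$ on $\Omega_{\varepsilon_0}\times M$. Hyperbolic block $\mathcal B_\ell(\alpha)$: the set of $(\underline\omega,x)\in\Omega_{\varepsilon_0}\times M$ such that for all $n\in\mathbb N$, $\prod_{i=0}^{n-1}\|Df^{\ell}_{\sigma^{i\ell}\underline\omega}|_{E^{cs}(\mathcal F^{i\ell}(\underline\omega,x))}\|\le e^{-\alpha\ell n}$ and $\prod_{i=0}^{n-1}\|Df^{-\ell}_{\sigma^{-i\ell}\underline\omega}|_{E^{cu}(\mathcal F^{-i\ell}(\underline\omega,x))}\|\le e^{-\alpha\ell n}$ (derivatives at the $M$-coordinate of the indicated point). *)

theory Defs
  imports "HOL-Analysis.Analysis" "HOL-Probability.Probability"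
begin

text \<open>
The compact Riemannian manifold M is represented (Nash embedding)
as a compact C2 embedded submanifold of a Euclidean space 'a, with the
Riemannian metric induced by the ambient inner product.
\<close>

definition C2_on :: "'a::euclidean_space set \<Rightarrow> ('a \<Rightarrow> 'b::euclidean_space) \<Rightarrow> bool" where
  "C2_on U g \<longleftrightarrow> open U \<and> (\<exists>g' g''. (\<forall>x\<in>U.
      (g has_derivative blinfun_apply (g' x)) (at x) \<and>
      (g' has_derivative blinfun_apply (g'' x)) (at x)) \<and> continuous_on U g'')"

definition C2_submanifold :: "'a::euclidean_space set \<Rightarrow> bool" where
  "C2_submanifold M \<longleftrightarrow> (\<forall>x\<in>M. \<exists>W (\<Phi>::'a \<Rightarrow> 'a) S. open W \<and> x \<in> W \<and> subspace S \<and>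
      C2_on W \<Phi> \<and> inj_on \<Phi> W \<and> open (\<Phi> ` W) \<and> C2_on (\<Phi> ` W) (inv_into W \<Phi>) \<and>
      \<Phi> ` (M \<inter> W) = \<Phi> ` W \<inter> S)"

definition curve_through :: "'a::euclidean_space set \<Rightarrow> 'a \<Rightarrow> 'a \<Rightarrow> (real \<Rightarrow> 'a) \<Rightarrow> bool" where
  "curve_through M x v \<gamma> \<longleftrightarrow> (\<forall>t. \<gamma> t \<in> M) \<and> \<gamma> 0 = x \<and> (\<gamma> has_vector_derivative v) (at 0)"

definition tangent_space :: "'a::euclidean_space set \<Rightarrow> 'a \<Rightarrow> 'a set" where
  "tangent_space M x = {v. \<exists>\<gamma>. curve_through M x v \<gamma>}"

definition tmap :: "'a::euclidean_space set \<Rightarrow> ('a \<Rightarrow> 'a) \<Rightarrow> 'a \<Rightarrow> 'a \<Rightarrow> 'a" where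
  "tmap M f x v = (THE w. \<forall>\<gamma>. curve_through M x v \<gamma> \<longrightarrow> ((f \<circ> \<gamma>) has_vector_derivative w) (at 0))"

definition opnorm_on :: "('a::euclidean_space \<Rightarrow> 'a) \<Rightarrow> 'a set \<Rightarrow> real" where
  "opnorm_on L E = Sup (insert 0 ((\<lambda>v. norm (L v)) ` {v \<in> E. norm v = 1}))"

definition orth_proj :: "'a::euclidean_space set \<Rightarrow> 'a \<Rightarrow> 'a" where
  "orth_proj E v = (THE w. w \<in> E \<and> (\<forall>u\<in>E. inner (v - w) u = 0))"

definition C2_map :: "'a::euclidean_space set \<Rightarrow> ('a \<Rightarrow> 'a) \<Rightarrow> bool" where
  "C2_map M f \<longleftrightarrow> (\<exists>U g. M \<subseteq> U \<and> C2_on U g \<and> (\<forall>x\<in>M. g x = f x))"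

definition C2_diffeo :: "'a::euclidean_space set \<Rightarrow> ('a \<Rightarrow> 'a) \<Rightarrow> bool" where
  "C2_diffeo M f \<longleftrightarrow> bij_betw f M M \<and> C2_map M f \<and> C2_map M (inv_into M f)"

text \<open>Continuity of a family (\<omega> \<mapsto> f\<omega>) into Diff2(M) with the C2 topology:
  there are C2 extensions to a common open neighbourhood whose values and first two
  derivatives depend jointly continuously on (\<omega>, x).\<close>
definition C2_continuous_family ::
  "'a::euclidean_space set \<Rightarrow> ('w::metric_space \<Rightarrow> 'a \<Rightarrow> 'a) \<Rightarrow> bool" where
  "C2_continuous_family M fam \<longleftrightarrow> (\<exists>U g g' g''. open U \<and> M \<subseteq> U \<and>
     (\<forall>\<omega> x. x \<in> U \<longrightarrow> (g \<omega> has_derivative blinfun_apply (g' \<omega> x)) (at x) \<and>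
                      (g' \<omega> has_derivative blinfun_apply (g'' \<omega> x)) (at x)) \<and>
     continuous_on (UNIV \<times> U) (\<lambda>(\<omega>, x). g \<omega> x) \<and>
     continuous_on (UNIV \<times> U) (\<lambda>(\<omega>, x). g' \<omega> x) \<and>
     continuous_on (UNIV \<times> U) (\<lambda>(\<omega>, x). g'' \<omega> x) \<and>
     (\<forall>\<omega>. \<forall>x\<in>M. g \<omega> x = fam \<omega> x))"

text \<open>Lebesgue (Riemannian volume) null subsets of M: a set A \<subseteq> M is null iff
  a normal tube of some radius around it is Lebesgue-null in the ambient space.\<close>
definition vol_null :: "'a::euclidean_space set \<Rightarrow> 'a set \<Rightarrow> bool" where
  "vol_null M A \<longleftrightarrow> A \<subseteq> M \<and> (\<exists>r>0. {a + n | a n. a \<in> A \<and> norm n < r \<and>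
       (\<forall>u\<in>tangent_space M a. inner n u = 0)} \<in> null_sets lebesgue)"

definition msupport :: "'w::metric_space measure \<Rightarrow> 'w set" where
  "msupport \<theta> = {w. \<forall>r>0. emeasure \<theta> (ball w r) > 0}"

definition regular_random_perturbation ::
  "'a::euclidean_space set \<Rightarrow> ('w::metric_space \<Rightarrow> 'a \<Rightarrow> 'a) \<Rightarrow> 'w \<Rightarrow> (real \<Rightarrow> 'w measure) \<Rightarrow> bool" where
  "regular_random_perturbation M fam \<omega>f \<theta> \<longleftrightarrow>
     (\<forall>\<omega>. C2_diffeo M (fam \<omega>)) \<and>
     C2_continuous_family M fam \<and>
     C2_continuous_family M (\<lambda>\<omega>. inv_into M (fam \<omega>)) \<and>
     (\<forall>\<epsilon>>0. prob_space (\<theta> \<epsilon>) \<and> sets (\<theta> \<epsilon>) = sets borel \<and> compact (msupport (\<theta> \<epsilon>))) \<and>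
     (\<forall>\<epsilon> \<epsilon>'. 0 < \<epsilon> \<and> \<epsilon> \<le> \<epsilon>' \<longrightarrow> msupport (\<theta> \<epsilon>) \<subseteq> msupport (\<theta> \<epsilon>')) \<and>
     (\<Inter>\<epsilon>\<in>{0<..}. msupport (\<theta> \<epsilon>)) = {\<omega>f} \<and>
     (\<forall>\<epsilon>>0. \<forall>x\<in>M. \<forall>A \<in> sets borel. vol_null M A \<longrightarrow>
         emeasure (\<theta> \<epsilon>) {\<omega>. fam \<omega> x \<in> A} = 0)"

text \<open>\<Omega>_\<epsilon> = supp(\<theta>_\<epsilon>^Z) = (supp \<theta>_\<epsilon>)^Z.\<close>
definition Omega :: "(real \<Rightarrow> 'w::metric_space measure) \<Rightarrow> real \<Rightarrow> (int \<Rightarrow> 'w) set" where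
  "Omega \<theta> \<epsilon> = {\<omega>. \<forall>i. \<omega> i \<in> msupport (\<theta> \<epsilon>)}"

definition shift :: "(int \<Rightarrow> 'w) \<Rightarrow> int \<Rightarrow> 'w" where
  "shift \<omega> = (\<lambda>i. \<omega> (i + 1))"

definition shift_inv :: "(int \<Rightarrow> 'w) \<Rightarrow> int \<Rightarrow> 'w" where
  "shift_inv \<omega> = (\<lambda>i. \<omega> (i - 1))"

fun fwd :: "('w \<Rightarrow> 'a \<Rightarrow> 'a) \<Rightarrow> (int \<Rightarrow> 'w) \<Rightarrow> nat \<Rightarrow> 'a \<Rightarrow> 'a" where
  "fwd fam \<omega> 0 = id"
| "fwd fam \<omega> (Suc n) = fam (\<omega> (int n)) \<circ> fwd fam \<omega> n"

fun bwd :: "'a set \<Rightarrow> ('w \<Rightarrow> 'a \<Rightarrow> 'a) \<Rightarrow> (int \<Rightarrow> 'w) \<Rightarrow> nat \<Rightarrow> 'a \<Rightarrow> 'a" where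
  "bwd M fam \<omega> 0 = id"
| "bwd M fam \<omega> (Suc n) = inv_into M (fam (\<omega> (- int (Suc n)))) \<circ> bwd M fam \<omega> n"

definition skew :: "('w \<Rightarrow> 'a \<Rightarrow> 'a) \<Rightarrow> (int \<Rightarrow> 'w) \<times> 'a \<Rightarrow> (int \<Rightarrow> 'w) \<times> 'a" where
  "skew fam p = (shift (fst p), fam (fst p 0) (snd p))"

definition skew_inv :: "'a set \<Rightarrow> ('w \<Rightarrow> 'a \<Rightarrow> 'a) \<Rightarrow> (int \<Rightarrow> 'w) \<times> 'a \<Rightarrow> (int \<Rightarrow> 'w) \<times> 'a" where
  "skew_inv M fam p = (shift_inv (fst p), inv_into M (fam (fst p (-1))) (snd p))"

definition direct_sum_tangent :: "'a::euclidean_space set \<Rightarrow> 'a \<Rightarrow> 'a set \<Rightarrow> 'a set \<Rightarrow> bool" where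
  "direct_sum_tangent M x E1 E2 \<longleftrightarrow> subspace E1 \<and> subspace E2 \<and> E1 \<noteq> {0} \<and> E2 \<noteq> {0} \<and>
     E1 \<inter> E2 = {0} \<and> {u + v | u v. u \<in> E1 \<and> v \<in> E2} = tangent_space M x"

definition dominated_splitting ::
  "'a::euclidean_space set \<Rightarrow> ('a \<Rightarrow> 'a) \<Rightarrow> ('a \<Rightarrow> 'a set) \<Rightarrow> ('a \<Rightarrow> 'a set) \<Rightarrow> bool" where
  "dominated_splitting M f Ecu Ecs \<longleftrightarrow>
     (\<forall>x\<in>M. direct_sum_tangent M x (Ecu x) (Ecs x) \<and>
        tmap M f x ` Ecu x = Ecu (f x) \<and> tmap M f x ` Ecs x = Ecs (f x)) \<and>
     (\<forall>v. continuous_on M (\<lambda>x. orth_proj (Ecu x) v)) \<and>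
     (\<forall>v. continuous_on M (\<lambda>x. orth_proj (Ecs x) v)) \<and>
     (\<exists>C \<kappa>. C > 0 \<and> 0 < \<kappa> \<and> \<kappa> < 1 \<and> (\<forall>x\<in>M. \<forall>n.
        opnorm_on (tmap M (f ^^ n) x) (Ecs x) *
        opnorm_on (tmap M (inv_into M f ^^ n) ((f ^^ n) x)) (Ecu ((f ^^ n) x)) \<le> C * \<kappa> ^ n))"

definition invariant_splitting ::
  "'a::euclidean_space set \<Rightarrow> ('w::metric_space \<Rightarrow> 'a \<Rightarrow> 'a) \<Rightarrow> ((int \<Rightarrow> 'w) \<times> 'a) set \<Rightarrow>
   ((int \<Rightarrow> 'w) \<Rightarrow> 'a \<Rightarrow> 'a set) \<Rightarrow> ((int \<Rightarrow> 'w) \<Rightarrow> 'a \<Rightarrow> 'a set) \<Rightarrow> bool" where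
  "invariant_splitting M fam X Ecu Ecs \<longleftrightarrow>
     (\<forall>(\<omega>, x)\<in>X. direct_sum_tangent M x (Ecu \<omega> x) (Ecs \<omega> x) \<and>
        tmap M (fam (\<omega> 0)) x ` Ecu \<omega> x = Ecu (shift \<omega>) (fam (\<omega> 0) x) \<and>
        tmap M (fam (\<omega> 0)) x ` Ecs \<omega> x = Ecs (shift \<omega>) (fam (\<omega> 0) x)) \<and>
     (\<forall>v. continuous_on X (\<lambda>(\<omega>, x). orth_proj (Ecu \<omega> x) v)) \<and>
     (\<forall>v. continuous_on X (\<lambda>(\<omega>, x). orth_proj (Ecs \<omega> x) v))"

definition hyp_block ::
  "'a::euclidean_space set \<Rightarrow> ('w::metric_space \<Rightarrow> 'a \<Rightarrow> 'a) \<Rightarrow> ((int \<Rightarrow> 'w) \<times> 'a) set \<Rightarrow>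
   ((int \<Rightarrow> 'w) \<Rightarrow> 'a \<Rightarrow> 'a set) \<Rightarrow> ((int \<Rightarrow> 'w) \<Rightarrow> 'a \<Rightarrow> 'a set) \<Rightarrow> nat \<Rightarrow> real \<Rightarrow>
   ((int \<Rightarrow> 'w) \<times> 'a) set" where
  "hyp_block M fam X Ecu Ecs l \<alpha> = {p \<in> X. \<forall>n::nat.
      (\<Prod>i<n. let q = (skew fam ^^ (i * l)) p in
          opnorm_on (tmap M (fwd fam (fst q) l) (snd q)) (Ecs (fst q) (snd q)))
        \<le> exp (- \<alpha> * real l * real n) \<and>
      (\<Prod>i<n. let q = (skew_inv M fam ^^ (i * l)) p in
          opnorm_on (tmap M (bwd M fam (fst q) l) (snd q)) (Ecu (fst q) (snd q)))
        \<le> exp (- \<alpha> * real l * real n)}"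

text \<open>Weak* convergence of probability measures concentrated on a compact set X:
  tested against bounded continuous functions (equivalently C(X), by Tietze).\<close>
definition weak_star_conv :: "(nat \<Rightarrow> 'b::metric_space measure) \<Rightarrow> 'b measure \<Rightarrow> bool" where
  "weak_star_conv \<mu>s \<mu> \<longleftrightarrow> (\<forall>g :: 'b \<Rightarrow> real. continuous_on UNIV g \<and> bounded (range g) \<longrightarrow>
      (\<lambda>n. integral\<^sup>L (\<mu>s n) g) \<longlonglongrightarrow> integral\<^sup>L \<mu> g)"

end

theory Submission
  imports Defs
begin

lemma orth_proj_unique:
  fixes E :: "'a::euclidean_space set"
  assumes "subspace E" "w \<in> E" "\<forall>u\<in>E. inner (v - w) u = 0"
  shows "orth_proj E v = w"
proof -
  have uq: "w' = w" if "w' \<in> E" "\<forall>u\<in>E. inner (v - w') u = 0" for w'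
  proof -
    have d: "w' - w \<in> E" using assms that subspace_diff by blast
    have "inner (w' - w) (w' - w) = inner ((v - w) - (v - w')) (w' - w)"
      by (simp add: algebra_simps)
    also have "\<dots> = inner (v - w) (w' - w) - inner (v - w') (w' - w)"
      by (simp add: inner_diff_left)
    also have "\<dots> = 0" using d assms(3) that(2) by simp
    finally show ?thesis by simp
  qed
  show ?thesis unfolding orth_proj_def
  proof (rule the_equality)
    show "w \<in> E \<and> (\<forall>u\<in>E. inner (v - w) u = 0)" using assms(2,3) by blast
  next
    fix w' assume "w' \<in> E \<and> (\<forall>u\<in>E. inner (v - w') u = 0)"
    then show "w' = w" using uq by blast
  qed
qed

lemma orth_proj_props:
  fixes E :: "'a::euclidean_space set"
  assumes "subspace E"
  shows "orth_proj E v \<in> E \<and> (\<forall>u\<in>E. inner (v - orth_proj E v) u = 0)"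
proof -
  obtain y z where y: "y \<in> span E" and z: "\<And>w. w \<in> span E \<Longrightarrow> orthogonal z w" and v: "v = y + z"
    using orthogonal_subspace_decomp_exists[of E v] by metis
  have yE: "y \<in> E" using y assms by (metis span_eq_iff)
  have o: "\<forall>u\<in>E. inner (v - y) u = 0" using z v by (auto simp: orthogonal_def span_base)
  have "orth_proj E v = y" by (rule orth_proj_unique[OF assms yE o])
  then show ?thesis using yE o by simp
qed

lemma orth_proj_in: "subspace E \<Longrightarrow> orth_proj E v \<in> E"
  using orth_proj_props by blast

lemma orth_proj_orth: "subspace E \<Longrightarrow> u \<in> E \<Longrightarrow> inner (v - orth_proj E v) u = 0"
  using orth_proj_props by blast

lemma orth_proj_id: "subspace E \<Longrightarrow> v \<in> E \<Longrightarrow> orth_proj E v = v"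
  by (rule orth_proj_unique) auto

lemma orth_proj_linear:
  fixes E :: "'a::euclidean_space set"
  assumes "subspace E"
  shows "linear (orth_proj E)"
proof
  fix x y
  show "orth_proj E (x + y) = orth_proj E x + orth_proj E y"
    apply (rule orth_proj_unique[OF assms])
    using assms orth_proj_in subspace_add apply blast
    using orth_proj_orth[OF assms, of _ x] orth_proj_orth[OF assms, of _ y]
    by (simp add: inner_diff_left inner_add_left algebra_simps)
next
  fix c :: real and x
  show "orth_proj E (c *\<^sub>R x) = c *\<^sub>R orth_proj E x"
    apply (rule orth_proj_unique[OF assms])
    using assms orth_proj_in subspace_scale apply blast
    using orth_proj_orth[OF assms, of _ x]
    by (simp add: inner_diff_left algebra_simps)
qed

lemma orth_proj_norm:
  fixes E :: "'a::euclidean_space set"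
  assumes "subspace E"
  shows "norm (orth_proj E v) \<le> norm v"
proof -
  let ?w = "orth_proj E v"
  have o: "inner (v - ?w) ?w = 0" using orth_proj_orth[OF assms orth_proj_in[OF assms]] .
  have orth: "orthogonal ?w (v - ?w)" using o unfolding orthogonal_def by (simp only: inner_commute)
  have "(norm (?w + (v - ?w)))\<^sup>2 = (norm ?w)\<^sup>2 + (norm (v - ?w))\<^sup>2"
    by (rule norm_add_Pythagorean[OF orth])
  then have "(norm v)\<^sup>2 = (norm ?w)\<^sup>2 + (norm (v - ?w))\<^sup>2" by simp
  then have "(norm ?w)\<^sup>2 \<le> (norm v)\<^sup>2" by (metis le_add_same_cancel1 zero_le_power2)
  then show ?thesis by (rule power2_le_imp_le) simp
qed

definition projb :: "'a::euclidean_space set \<Rightarrow> 'a \<Rightarrow>\<^sub>L 'a" where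
  "projb E = Blinfun (orth_proj E)"

lemma projb_apply: "subspace E \<Longrightarrow> blinfun_apply (projb E) = orth_proj E"
proof -
  assume "subspace E"
  then have "bounded_linear (orth_proj E)" using orth_proj_linear linear_conv_bounded_linear by blast
  then show ?thesis unfolding projb_def by (rule bounded_linear_Blinfun_apply)
qed

lemma opnorm_on_eq:
  fixes E :: "'a::euclidean_space set"
  assumes E: "subspace E"
  shows "opnorm_on (blinfun_apply D) E = norm (D o\<^sub>L projb E)"
proof -
  let ?A = "insert 0 ((\<lambda>v. norm (blinfun_apply D v)) ` {v \<in> E. norm v = 1})"
  have bdd: "bdd_above ?A"
    by (rule bdd_aboveI[where M="norm D"]) (auto intro: order_trans[OF norm_blinfun])
  have le1: "opnorm_on (blinfun_apply D) E \<le> norm (D o\<^sub>L projb E)"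
    unfolding opnorm_on_def
  proof (rule cSup_least)
    fix x assume "x \<in> ?A"
    then show "x \<le> norm (D o\<^sub>L projb E)"
    proof
      assume "x = 0" then show ?thesis by simp
    next
      assume "x \<in> (\<lambda>v. norm (blinfun_apply D v)) ` {v \<in> E. norm v = 1}"
      then obtain v where v: "v \<in> E" "norm v = 1" "x = norm (blinfun_apply D v)" by auto
      have "blinfun_apply D v = blinfun_apply (D o\<^sub>L projb E) v"
        using v E by (simp add: projb_apply orth_proj_id)
      then show ?thesis using v norm_blinfun[of "D o\<^sub>L projb E" v] by simp
    qed
  qed simp
  have S0: "0 \<le> opnorm_on (blinfun_apply D) E"
    unfolding opnorm_on_def by (rule cSup_upper[OF _ bdd]) simp
  have le2: "norm (D o\<^sub>L projb E) \<le> opnorm_on (blinfun_apply D) E"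
  proof (rule norm_blinfun_bound[OF S0])
    fix u
    let ?w = "orth_proj E u"
    have wE: "?w \<in> E" using orth_proj_in[OF E] .
    have "norm (blinfun_apply D ?w) \<le> opnorm_on (blinfun_apply D) E * norm ?w"
    proof (cases "?w = 0")
      case True then show ?thesis by simp
    next
      case False
      let ?e = "?w /\<^sub>R norm ?w"
      have eE: "?e \<in> E" using wE E subspace_scale by blast
      have en: "norm ?e = 1" using False by simp
      have "norm (blinfun_apply D ?e) \<le> opnorm_on (blinfun_apply D) E"
        unfolding opnorm_on_def by (rule cSup_upper[OF _ bdd]) (use eE en in auto)
      moreover have "blinfun_apply D ?w = norm ?w *\<^sub>R blinfun_apply D ?e"
        using False by (simp add: blinfun.scaleR_right)
      then have "norm (blinfun_apply D ?w) = norm ?w * norm (blinfun_apply D ?e)" by simp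
      moreover have "norm ?w * norm (blinfun_apply D ?e) \<le> norm ?w * opnorm_on (blinfun_apply D) E"
        by (rule mult_left_mono) (use calculation in auto)
      ultimately show ?thesis
        by (simp add: mult.commute)
    qed
    also have "\<dots> \<le> opnorm_on (blinfun_apply D) E * norm u"
      by (rule mult_left_mono[OF orth_proj_norm[OF E] S0])
    finally show "norm (blinfun_apply (D o\<^sub>L projb E) u) \<le> opnorm_on (blinfun_apply D) E * norm u"
      using E by (simp add: projb_apply)
  qed
  show ?thesis using le1 le2 by simp
qed

lemma opnorm_on_le:
  "subspace E \<Longrightarrow> opnorm_on (blinfun_apply D) E \<le> norm D"
proof -
  assume E: "subspace E"
  have n1: "norm (projb E) \<le> 1"
    by (rule norm_blinfun_bound) (use E orth_proj_norm in \<open>auto simp: projb_apply\<close>)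
  have "norm (D o\<^sub>L projb E) \<le> norm D * norm (projb E)" by (rule norm_blinfun_compose)
  also have "\<dots> \<le> norm D" using n1 by (simp add: mult_left_le)
  finally show ?thesis using opnorm_on_eq[OF E] by simp
qed

lemma opnorm_on_cong:
  assumes "\<And>v. v \<in> E \<Longrightarrow> L v = L' v" shows "opnorm_on L E = opnorm_on L' E"
proof -
  have "(\<lambda>v. norm (L v)) ` {v \<in> E. norm v = 1} = (\<lambda>v. norm (L' v)) ` {v \<in> E. norm v = 1}"
    by (rule image_cong) (use assms in auto)
  then show ?thesis unfolding opnorm_on_def by simp
qed


fun itr :: "('w \<Rightarrow> 'a \<Rightarrow> 'a) \<Rightarrow> (nat \<Rightarrow> int) \<Rightarrow> (int \<Rightarrow> 'w) \<Rightarrow> nat \<Rightarrow> 'a \<Rightarrow> 'a" where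
  "itr h idx \<omega> 0 = id"
| "itr h idx \<omega> (Suc n) = h (\<omega> (idx n)) \<circ> itr h idx \<omega> n"

fun dit :: "('w \<Rightarrow> 'a::euclidean_space \<Rightarrow> 'a \<Rightarrow>\<^sub>L 'a) \<Rightarrow> ('w \<Rightarrow> 'a \<Rightarrow> 'a) \<Rightarrow> (nat \<Rightarrow> int) \<Rightarrow>
   (int \<Rightarrow> 'w) \<Rightarrow> nat \<Rightarrow> 'a \<Rightarrow> 'a \<Rightarrow>\<^sub>L 'a" where
  "dit G' h idx \<omega> 0 x = id_blinfun"
| "dit G' h idx \<omega> (Suc n) x = G' (\<omega> (idx n)) (itr h idx \<omega> n x) o\<^sub>L dit G' h idx \<omega> n x"

lemma fwd_itr: "fwd fam \<omega> n = itr fam int \<omega> n"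
  by (induction n) auto

lemma bwd_itr: "bwd M fam \<omega> n = itr (\<lambda>w. inv_into M (fam w)) (\<lambda>n. - int (Suc n)) \<omega> n"
  by (induction n) auto

lemma itr_in:
  assumes "\<And>w y. y \<in> M \<Longrightarrow> h w y \<in> M" "x \<in> M"
  shows "itr h idx \<omega> n x \<in> M"
  by (induction n) (use assms in auto)

lemma itr_inM:
  assumes "\<And>w y. y \<in> M \<Longrightarrow> h w y \<in> M"
  shows "\<And>\<omega> n y. y \<in> M \<Longrightarrow> itr h idx \<omega> n y \<in> M"
  using itr_in[of M h] assms by blast

lemma tmap_itr:
  fixes M :: "'a::euclidean_space set"
  assumes hM: "\<And>w y. y \<in> M \<Longrightarrow> h w y \<in> M"
    and MU: "M \<subseteq> U"
    and der: "\<And>w y. y \<in> U \<Longrightarrow> (G w has_derivative blinfun_apply (G' w y)) (at y)"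
    and eq: "\<And>w y. y \<in> M \<Longrightarrow> G w y = h w y"
    and x: "x \<in> M" and v: "v \<in> tangent_space M x"
  shows "tmap M (itr h idx \<omega> n) x v = blinfun_apply (dit G' h idx \<omega> n x) v"
proof -
  have iM: "\<And>\<omega> n y. y \<in> M \<Longrightarrow> itr h idx \<omega> n y \<in> M"
  proof -
    fix \<omega> n y assume "y \<in> M" then show "itr h idx \<omega> n y \<in> M" by (induction n) (auto intro: hM)
  qed
  have key: "((itr h idx \<omega> n \<circ> \<gamma>) has_vector_derivative blinfun_apply (dit G' h idx \<omega> n x) v) (at 0)"
    if c: "curve_through M x v \<gamma>" for \<gamma>
  proof (induction n)
    case 0
    then show ?case using c by (simp add: curve_through_def)
  next
    case (Suc n)
    let ?f = "itr h idx \<omega> n \<circ> \<gamma>"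
    let ?w = "\<omega> (idx n)"
    have inM: "?f t \<in> M" for t using c iM by (auto simp: curve_through_def)
    have f0: "?f 0 = itr h idx \<omega> n x" using c by (simp add: curve_through_def)
    have eqf: "itr h idx \<omega> (Suc n) \<circ> \<gamma> = G ?w \<circ> ?f"
      using inM eq by (auto simp: fun_eq_iff)
    have dG: "(G ?w has_derivative blinfun_apply (G' ?w (itr h idx \<omega> n x))) (at (?f 0) within ?f ` UNIV)"
      using der[of "itr h idx \<omega> n x" ?w] f0 inM[of 0] MU by (auto intro: has_derivative_at_withinI)
    have d: "((G ?w \<circ> ?f) has_vector_derivative
            blinfun_apply (G' ?w (itr h idx \<omega> n x)) (blinfun_apply (dit G' h idx \<omega> n x) v)) (at 0 within UNIV)"
      by (rule vector_derivative_diff_chain_within) (use Suc dG in simp_all)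
    show ?case using d by (simp only: eqf dit.simps blinfun_apply_blinfun_compose)
  qed
  obtain \<gamma>0 where g0: "curve_through M x v \<gamma>0" using v by (auto simp: tangent_space_def)
  show ?thesis unfolding tmap_def
  proof (rule the_equality)
    show "\<forall>\<gamma>. curve_through M x v \<gamma> \<longrightarrow>
       ((itr h idx \<omega> n \<circ> \<gamma>) has_vector_derivative blinfun_apply (dit G' h idx \<omega> n x) v) (at 0)"
      using key by blast
  next
    fix w assume "\<forall>\<gamma>. curve_through M x v \<gamma> \<longrightarrow> ((itr h idx \<omega> n \<circ> \<gamma>) has_vector_derivative w) (at 0)"
    then have "((itr h idx \<omega> n \<circ> \<gamma>0) has_vector_derivative w) (at 0)" using g0 by blast
    then show "w = blinfun_apply (dit G' h idx \<omega> n x) v"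
      using key[OF g0] vector_derivative_unique_at by blast
  qed
qed

lemma cont_coord: "continuous_on A (\<lambda>p::(int \<Rightarrow> 'w::topological_space) \<times> 'b::topological_space. fst p i)"
  by (rule continuous_on_compose2[OF continuous_on_product_coordinates continuous_on_fst]) auto

lemma cont_itr:
  fixes M :: "'a::euclidean_space set" and G :: "'w::topological_space \<Rightarrow> 'a \<Rightarrow> 'a"
  assumes hM: "\<And>w y. y \<in> M \<Longrightarrow> h w y \<in> M"
    and MU: "M \<subseteq> U"
    and cG: "continuous_on (UNIV \<times> U) (\<lambda>(w, y). G w y)"
    and eq: "\<And>w y. y \<in> M \<Longrightarrow> G w y = h w y"
  shows "continuous_on (UNIV \<times> M) (\<lambda>p. itr h idx (fst p) n (snd p))"
proof -
  have iM: "\<And>\<omega> n y. y \<in> M \<Longrightarrow> itr h idx \<omega> n y \<in> M"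
  proof -
    fix \<omega> n y assume "y \<in> M" then show "itr h idx \<omega> n y \<in> M" by (induction n) (auto intro: hM)
  qed
  show ?thesis
  proof (induction n)
  case 0
  then show ?case by (simp add: continuous_on_snd)
next
  case (Suc n)
  have inner: "continuous_on (UNIV \<times> M) (\<lambda>p. (fst p (idx n), itr h idx (fst p) n (snd p)))"
    by (intro continuous_on_Pair cont_coord Suc)
  have img: "(\<lambda>p. (fst p (idx n), itr h idx (fst p) n (snd p))) ` (UNIV \<times> M) \<subseteq> UNIV \<times> U"
    using iM MU by auto
  have c: "continuous_on (UNIV \<times> M) (\<lambda>p. (\<lambda>(w, y). G w y) (fst p (idx n), itr h idx (fst p) n (snd p)))"
    by (rule continuous_on_compose2[OF cG inner img])
  show ?case
    by (rule continuous_on_cong[THEN iffD1, OF refl _ c]) (use eq iM in auto)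
  qed
qed

lemma cont_dit:
  fixes M :: "'a::euclidean_space set" and G :: "'w::topological_space \<Rightarrow> 'a \<Rightarrow> 'a"
  assumes hM: "\<And>w y. y \<in> M \<Longrightarrow> h w y \<in> M"
    and MU: "M \<subseteq> U"
    and cG: "continuous_on (UNIV \<times> U) (\<lambda>(w, y). G w y)"
    and cG': "continuous_on (UNIV \<times> U) (\<lambda>(w, y). G' w y)"
    and eq: "\<And>w y. y \<in> M \<Longrightarrow> G w y = h w y"
  shows "continuous_on (UNIV \<times> M) (\<lambda>p. dit G' h idx (fst p) n (snd p))"
proof -
  have iM: "\<And>\<omega> n y. y \<in> M \<Longrightarrow> itr h idx \<omega> n y \<in> M"
  proof -
    fix \<omega> n y assume "y \<in> M" then show "itr h idx \<omega> n y \<in> M" by (induction n) (auto intro: hM)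
  qed
  show ?thesis
  proof (induction n)
  case 0
  then show ?case by simp
next
  case (Suc n)
  have inner: "continuous_on (UNIV \<times> M) (\<lambda>p. (fst p (idx n), itr h idx (fst p) n (snd p)))"
    by (intro continuous_on_Pair cont_coord cont_itr[OF hM MU cG eq])
  have img: "(\<lambda>p. (fst p (idx n), itr h idx (fst p) n (snd p))) ` (UNIV \<times> M) \<subseteq> UNIV \<times> U"
    using iM MU by auto
  have c: "continuous_on (UNIV \<times> M) (\<lambda>p. (\<lambda>(w, y). G' w y) (fst p (idx n), itr h idx (fst p) n (snd p)))"
    by (rule continuous_on_compose2[OF cG' inner img])
  have "continuous_on (UNIV \<times> M) (\<lambda>p. G' (fst p (idx n)) (itr h idx (fst p) n (snd p)) o\<^sub>L dit G' h idx (fst p) n (snd p))"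
    by (rule bounded_bilinear.continuous_on[OF bounded_bilinear_blinfun_compose]) (use c Suc in simp_all)
  then show ?case by simp
  qed
qed

lemma norm_dit:
  fixes M :: "'a::euclidean_space set"
  assumes hM: "\<And>w y. y \<in> M \<Longrightarrow> h w y \<in> M"
    and K: "\<And>w y. w \<in> S \<Longrightarrow> y \<in> M \<Longrightarrow> norm (G' w y) \<le> K" "0 \<le> K"
    and \<omega>: "\<And>i. \<omega> (idx i) \<in> S" and x: "x \<in> M"
  shows "norm (dit G' h idx \<omega> n x) \<le> K ^ n"
proof -
  have iM: "\<And>\<omega> n y. y \<in> M \<Longrightarrow> itr h idx \<omega> n y \<in> M"
  proof -
    fix \<omega> n y assume "y \<in> M" then show "itr h idx \<omega> n y \<in> M" by (induction n) (auto intro: hM)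
  qed
  show ?thesis
  proof (induction n)
  case 0
  then show ?case by (simp add: norm_blinfun_id_le)
next
  case (Suc n)
  have "norm (dit G' h idx \<omega> (Suc n) x) \<le> norm (G' (\<omega> (idx n)) (itr h idx \<omega> n x)) * norm (dit G' h idx \<omega> n x)"
    by (simp add: norm_blinfun_compose)
  also have "\<dots> \<le> K * K ^ n"
    by (rule mult_mono) (use K \<omega> iM[OF x] Suc in auto)
  finally show ?case by simp
  qed
qed


lemma funpow_measurable: "T \<in> measurable N N \<Longrightarrow> (T ^^ i) \<in> measurable N N"
  by (induction i) (auto intro: measurable_comp)

lemma sum_shift_T:
  "(\<Sum>i<Suc k. \<psi> ((T ^^ i) p)) = \<psi> p + (\<Sum>i<k. \<psi> ((T ^^ i) (T p)))"
  by (subst sum.lessThan_Suc_shift) (simp add: funpow_Suc_right del: funpow.simps)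

fun Mx :: "(nat \<Rightarrow> 'b \<Rightarrow> real) \<Rightarrow> nat \<Rightarrow> 'b \<Rightarrow> real" where
  "Mx Sk 0 p = Sk 0 p"
| "Mx Sk (Suc N) p = max (Mx Sk N p) (Sk (Suc N) p)"

lemma Mx_ge: "k \<le> N \<Longrightarrow> Sk k p \<le> Mx Sk N p"
  by (induction N) (auto simp: le_Suc_eq max.coboundedI1)

lemma Mx_attained: "\<exists>k\<le>N. Mx Sk N p = Sk k p"
  by (induction N) (auto simp: max_def le_Suc_eq)

lemma maximal_ergodic:
  fixes \<nu> :: "'b measure" and T :: "'b \<Rightarrow> 'b" and \<psi> :: "'b \<Rightarrow> real"
  assumes P: "prob_space \<nu>" and mT: "T \<in> measurable \<nu> \<nu>" and inv: "distr \<nu> \<nu> T = \<nu>"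
    and m\<psi>: "\<psi> \<in> borel_measurable \<nu>" and bnd: "\<And>p. p \<in> space \<nu> \<Longrightarrow> \<bar>\<psi> p\<bar> \<le> C" and C0: "0 \<le> C"
  shows "0 \<le> (\<integral>p. indicator {p \<in> space \<nu>. \<exists>k\<le>N. 0 < (\<Sum>i<k. \<psi> ((T ^^ i) p))} p * \<psi> p \<partial>\<nu>)"
proof -
  interpret prob_space \<nu> by (rule P)
  define Sk where "Sk k p = (\<Sum>i<k. \<psi> ((T ^^ i) p))" for k p
  define E where "E = {p \<in> space \<nu>. \<exists>k\<le>N. 0 < Sk k p}"
  define Mf where "Mf = Mx Sk N"
  have mTi: "(T ^^ i) \<in> measurable \<nu> \<nu>" for i by (rule funpow_measurable[OF mT])
  have mSk: "(\<lambda>p. Sk k p) \<in> borel_measurable \<nu>" for k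
    unfolding Sk_def by (intro borel_measurable_sum measurable_compose[OF mTi m\<psi>])
  have mMx: "(\<lambda>p. Mx Sk n p) \<in> borel_measurable \<nu>" for n
    by (induction n) (simp_all add: mSk borel_measurable_max)
  have mMf: "Mf \<in> borel_measurable \<nu>" unfolding Mf_def by (rule mMx)
  have Tsp: "T p \<in> space \<nu>" if "p \<in> space \<nu>" for p using mT that by (rule measurable_space)
  have Tisp: "(T ^^ i) p \<in> space \<nu>" if "p \<in> space \<nu>" for p i using mTi that by (rule measurable_space)
  have Sk0: "Sk 0 p = 0" for p by (simp add: Sk_def)
  have Skb: "\<bar>Sk k p\<bar> \<le> real k * C" if "p \<in> space \<nu>" for k p
  proof -
    have "\<bar>Sk k p\<bar> \<le> (\<Sum>i<k. \<bar>\<psi> ((T ^^ i) p)\<bar>)" unfolding Sk_def by (rule sum_abs)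
    also have "\<dots> \<le> (\<Sum>i<k. C)" by (rule sum_mono) (use bnd Tisp that in auto)
    finally show ?thesis by simp
  qed
  have Mf0: "0 \<le> Mf p" for p unfolding Mf_def using Mx_ge[of 0 N Sk p] Sk0[of p] by linarith
  have Mfb: "\<bar>Mf p\<bar> \<le> real N * C" if "p \<in> space \<nu>" for p
  proof -
    obtain k where k: "k \<le> N" "Mf p = Sk k p" using Mx_attained[of N Sk p] unfolding Mf_def by blast
    have "real k * C \<le> real N * C" using k C0 by (simp add: mult_right_mono)
    then show ?thesis using k Skb[OF that, of k] by linarith
  qed
  have key: "Mf p \<le> \<psi> p + Mf (T p)" if p: "p \<in> space \<nu>" "0 < Mf p" for p
  proof -
    obtain k where k: "k \<le> N" "Mf p = Sk k p" using Mx_attained[of N Sk p] unfolding Mf_def by blast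
    then have "k \<noteq> 0" using p Sk0[of p] by (metis less_irrefl)
    then obtain j where j: "k = Suc j" by (cases k) auto
    have "Sk k p = \<psi> p + Sk j (T p)" unfolding Sk_def j by (rule sum_shift_T)
    also have "Sk j (T p) \<le> Mf (T p)" unfolding Mf_def by (rule Mx_ge) (use k j in simp)
    then have "\<psi> p + Sk j (T p) \<le> \<psi> p + Mf (T p)" by simp
    finally show ?thesis using k by simp
  qed
  have EM: "E = {p \<in> space \<nu>. 0 < Mf p}"
  proof -
    have "(\<exists>k\<le>N. 0 < Sk k p) \<longleftrightarrow> 0 < Mf p" for p
    proof
      assume "\<exists>k\<le>N. 0 < Sk k p"
      then obtain k where "k \<le> N" "0 < Sk k p" by blast
      then show "0 < Mf p" using Mx_ge[of k N Sk p] unfolding Mf_def by linarith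
    next
      assume "0 < Mf p"
      moreover obtain k where "k \<le> N" "Mf p = Sk k p" using Mx_attained[of N Sk p] unfolding Mf_def by blast
      ultimately show "\<exists>k\<le>N. 0 < Sk k p" by auto
    qed
    then show ?thesis unfolding E_def by simp
  qed
  have pw: "Mf p - Mf (T p) \<le> indicator E p * \<psi> p" if "p \<in> space \<nu>" for p
  proof (cases "p \<in> E")
    case True then show ?thesis using key[OF that] EM by auto
  next
    case False then have "Mf p = 0" using EM Mf0[of p] that by auto
    then show ?thesis using False Mf0[of "T p"] by simp
  qed
  have intMf: "integrable \<nu> Mf"
    by (rule integrable_const_bound[where B="real N * C"]) (use Mfb mMf in auto)
  have intMfT: "integrable \<nu> (\<lambda>p. Mf (T p))"
    by (rule integrable_const_bound[where B="real N * C"]) (use Mfb Tsp measurable_compose[OF mT mMf] in auto)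
  have mE: "E \<in> sets \<nu>" unfolding EM by (rule borel_measurable_less[OF borel_measurable_const mMf])
  have intE: "integrable \<nu> (\<lambda>p. indicator E p * \<psi> p)"
    by (rule integrable_const_bound[where B="C"]) (use bnd C0 borel_measurable_times[OF borel_measurable_indicator[OF mE] m\<psi>] in \<open>auto simp: indicator_def\<close>)
  have "(\<integral>p. Mf (T p) \<partial>\<nu>) = (\<integral>p. Mf p \<partial>distr \<nu> \<nu> T)"
    by (rule integral_distr[symmetric]) (use mT mMf in auto)
  also have "\<dots> = (\<integral>p. Mf p \<partial>\<nu>)" using inv by simp
  finally have eqI: "(\<integral>p. Mf (T p) \<partial>\<nu>) = (\<integral>p. Mf p \<partial>\<nu>)" .
  have "0 = (\<integral>p. Mf p - Mf (T p) \<partial>\<nu>)" using eqI intMf intMfT by simp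
  also have "\<dots> \<le> (\<integral>p. indicator E p * \<psi> p \<partial>\<nu>)"
    by (rule integral_mono_AE) (use intMf intMfT intE pw in auto)
  finally show ?thesis unfolding E_def Sk_def .
qed


lemma block_estimate:
  fixes \<nu> :: "'b measure" and T :: "'b \<Rightarrow> 'b" and c :: "'b \<Rightarrow> real"
  assumes P: "prob_space \<nu>" and mT: "T \<in> measurable \<nu> \<nu>" and inv: "distr \<nu> \<nu> T = \<nu>"
    and mc: "c \<in> borel_measurable \<nu>"
    and c0: "\<And>p. p \<in> space \<nu> \<Longrightarrow> 0 \<le> c p" and cC: "\<And>p. p \<in> space \<nu> \<Longrightarrow> c p \<le> C"
    and C1: "1 \<le> C" and a: "0 < a" and ab: "a < b"
  shows "measure \<nu> {p \<in> space \<nu>. \<exists>n. exp (- a * real n) < (\<Prod>i<n. c ((T ^^ i) p))}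
         \<le> (1 + (ln C + a) / (b - a)) * measure \<nu> {p \<in> space \<nu>. exp (- b) \<le> c p}"
proof -
  interpret prob_space \<nu> by (rule P)
  define \<psi> where "\<psi> p = ln (max (c p) (exp (- b))) + a" for p
  define B where "B = {p \<in> space \<nu>. exp (- b) \<le> c p}"
  define K where "K = (ln C + a) / (b - a)"
  define Sk where "Sk k p = (\<Sum>i<k. \<psi> ((T ^^ i) p))" for k p
  define E where "E N = {p \<in> space \<nu>. \<exists>k\<le>N. 0 < Sk k p}" for N
  have lnC: "0 \<le> ln C" using C1 by simp
  have m\<psi>: "\<psi> \<in> borel_measurable \<nu>"
    unfolding \<psi>_def by (intro borel_measurable_add borel_measurable_ln borel_measurable_max mc borel_measurable_const)
  have mTi: "(T ^^ i) \<in> measurable \<nu> \<nu>" for i by (rule funpow_measurable[OF mT])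
  have Tisp: "(T ^^ i) p \<in> space \<nu>" if "p \<in> space \<nu>" for p i using mTi that by (rule measurable_space)
  have \<psi>lo: "a - b \<le> \<psi> p" for p
  proof -
    have "ln (exp (- b)) \<le> ln (max (c p) (exp (- b)))" by (subst ln_le_cancel_iff) (auto simp: less_max_iff_disj)
    then show ?thesis unfolding \<psi>_def by simp
  qed
  have \<psi>hi: "\<psi> p \<le> ln C + a" if "p \<in> space \<nu>" for p
  proof -
    have "exp (- b) \<le> C" using C1 a ab by (smt (verit) exp_le_one_iff)
    then have "max (c p) (exp (- b)) \<le> C" using cC[OF that] by simp
    then have "ln (max (c p) (exp (- b))) \<le> ln C" using C1 by (subst ln_le_cancel_iff) (auto simp: less_max_iff_disj)
    then show ?thesis unfolding \<psi>_def by simp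
  qed
  have \<psi>abs: "\<bar>\<psi> p\<bar> \<le> ln C + a + b" if "p \<in> space \<nu>" for p
    using \<psi>lo[of p] \<psi>hi[OF that] a ab lnC by linarith
  have \<psi>B: "\<psi> p = a - b" if "p \<notin> B" "p \<in> space \<nu>" for p
  proof -
    have "c p < exp (- b)" using that unfolding B_def by auto
    then show ?thesis unfolding \<psi>_def by simp
  qed
  have mSk: "(\<lambda>p. Sk k p) \<in> borel_measurable \<nu>" for k
    unfolding Sk_def by (intro borel_measurable_sum measurable_compose[OF mTi m\<psi>])
  have mB: "B \<in> sets \<nu>" unfolding B_def by (rule borel_measurable_le[OF borel_measurable_const mc])
  have mE: "E N \<in> sets \<nu>" for N
  proof -
    have "E N = (\<Union>k\<in>{..N}. {p \<in> space \<nu>. 0 < Sk k p})" unfolding E_def by auto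
    also have "\<dots> \<in> sets \<nu>"
      by (intro sets.finite_UN finite_atMost borel_measurable_less[OF borel_measurable_const mSk])
    finally show ?thesis .
  qed
  have EN: "measure \<nu> (E N) \<le> (1 + K) * measure \<nu> B" for N
  proof -
    have h1: "0 \<le> (\<integral>p. indicator (E N) p * \<psi> p \<partial>\<nu>)"
      using maximal_ergodic[OF P mT inv m\<psi> \<psi>abs, of N] a ab lnC unfolding E_def Sk_def by simp
    have pw: "indicator (E N) p * \<psi> p \<le> (ln C + a) * indicator B p - (b - a) * indicator (E N - B) p"
      if p: "p \<in> space \<nu>" for p
    proof (cases "p \<in> B")
      case True
      then show ?thesis using \<psi>hi[OF p] lnC a by (auto simp: indicator_def)
    next
      case False
      then show ?thesis using \<psi>B[OF False p] by (auto simp: indicator_def)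
    qed
    have int1: "integrable \<nu> (\<lambda>p. indicator (E N) p * \<psi> p)"
      by (rule integrable_const_bound[where B="ln C + a + b"])
         (use lnC a ab \<psi>abs borel_measurable_times[OF borel_measurable_indicator[OF mE] m\<psi>] in \<open>auto simp: indicator_def\<close>)
    have mEB: "E N - B \<in> sets \<nu>" using mE mB by auto
    have int2: "integrable \<nu> (\<lambda>p. (ln C + a) * indicator B p - (b - a) * indicator (E N - B) p)"
      by (intro Bochner_Integration.integrable_diff integrable_mult_right integrable_real_indicator)
         (use mB mEB in \<open>auto simp: emeasure_eq_measure\<close>)
    have "(\<integral>p. indicator (E N) p * \<psi> p \<partial>\<nu>)
          \<le> (\<integral>p. (ln C + a) * indicator B p - (b - a) * indicator (E N - B) p \<partial>\<nu>)"
      by (rule integral_mono_AE) (use int1 int2 pw in auto)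
    also have "\<dots> = (ln C + a) * measure \<nu> B - (b - a) * measure \<nu> (E N - B)"
    proof -
      have ia: "integrable \<nu> (\<lambda>p. (ln C + a) * indicator B p)"
        by (intro integrable_mult_right integrable_real_indicator) (use mB in \<open>auto simp: emeasure_eq_measure\<close>)
      have ib: "integrable \<nu> (\<lambda>p. (b - a) * indicator (E N - B) p)"
        by (intro integrable_mult_right integrable_real_indicator) (use mEB in \<open>auto simp: emeasure_eq_measure\<close>)
      show ?thesis
        by (simp add: Bochner_Integration.integral_diff[OF ia ib] integral_mult_right_zero
              integral_indicator mB mEB emeasure_eq_measure del: integral_mult_right)
    qed
    finally have "(b - a) * measure \<nu> (E N - B) \<le> (ln C + a) * measure \<nu> B" using h1 by linarith
    then have d: "measure \<nu> (E N - B) \<le> K * measure \<nu> B"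
      unfolding K_def using ab by (simp add: field_simps)
    have "measure \<nu> (E N) \<le> measure \<nu> (B \<union> (E N - B))"
      by (rule finite_measure_mono) (use mB mEB mE in auto)
    also have "\<dots> = measure \<nu> B + measure \<nu> (E N - B)"
      by (rule finite_measure_Union) (use mB mEB in auto)
    finally show ?thesis using d by (simp add: algebra_simps)
  qed
  have sub: "{p \<in> space \<nu>. \<exists>n. exp (- a * real n) < (\<Prod>i<n. c ((T ^^ i) p))} \<subseteq> (\<Union>N. E N)"
  proof
    fix p assume "p \<in> {p \<in> space \<nu>. \<exists>n. exp (- a * real n) < (\<Prod>i<n. c ((T ^^ i) p))}"
    then obtain n where p: "p \<in> space \<nu>" and n: "exp (- a * real n) < (\<Prod>i<n. c ((T ^^ i) p))" by auto
    have "(\<Prod>i<n. c ((T ^^ i) p)) \<le> (\<Prod>i<n. max (c ((T ^^ i) p)) (exp (- b)))"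
      by (rule prod_mono) (use c0 Tisp[OF p] in auto)
    also have "\<dots> = (\<Prod>i<n. exp (ln (max (c ((T ^^ i) p)) (exp (- b)))))"
      by (rule prod.cong) (auto simp: less_max_iff_disj)
    also have "\<dots> = exp (\<Sum>i<n. ln (max (c ((T ^^ i) p)) (exp (- b))))"
      by (simp add: exp_sum)
    also have "(\<Sum>i<n. ln (max (c ((T ^^ i) p)) (exp (- b)))) = Sk n p - a * real n"
      unfolding Sk_def \<psi>_def by (simp add: sum.distrib)
    finally have le: "(\<Prod>i<n. c ((T ^^ i) p)) \<le> exp (Sk n p - a * real n)" .
    have "exp (- a * real n) < exp (Sk n p - a * real n)" using n le by linarith
    then have "0 < Sk n p" by simp
    then show "p \<in> (\<Union>N. E N)" using p unfolding E_def by blast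
  qed
  have inc: "incseq E" unfolding incseq_def E_def by (auto intro: order_trans)
  have lim: "(\<lambda>N. measure \<nu> (E N)) \<longlonglongrightarrow> measure \<nu> (\<Union>N. E N)"
    by (rule finite_Lim_measure_incseq) (use mE inc in auto)
  have "measure \<nu> (\<Union>N. E N) \<le> (1 + K) * measure \<nu> B"
    by (rule tendsto_upperbound[OF lim]) (use EN in auto)
  moreover have "measure \<nu> {p \<in> space \<nu>. \<exists>n. exp (- a * real n) < (\<Prod>i<n. c ((T ^^ i) p))} \<le> measure \<nu> (\<Union>N. E N)"
    by (rule finite_measure_mono[OF sub]) (use mE in auto)
  ultimately show ?thesis unfolding K_def B_def by linarith
qed


locale sys =
  fixes M :: "'a::euclidean_space set" and fam :: "'w::metric_space \<Rightarrow> 'a \<Rightarrow> 'a"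
    and S :: "'w set" and Ecu Ecs :: "(int \<Rightarrow> 'w) \<Rightarrow> 'a \<Rightarrow> 'a set"
    and U :: "'a set" and g :: "'w \<Rightarrow> 'a \<Rightarrow> 'a" and g' :: "'w \<Rightarrow> 'a \<Rightarrow> 'a \<Rightarrow>\<^sub>L 'a"
    and Ui :: "'a set" and gi :: "'w \<Rightarrow> 'a \<Rightarrow> 'a" and gi' :: "'w \<Rightarrow> 'a \<Rightarrow> 'a \<Rightarrow>\<^sub>L 'a"
  assumes cM: "compact M" and cS: "compact S"
    and bij: "\<And>w. bij_betw (fam w) M M"
    and MU: "M \<subseteq> U" and der: "\<And>w y. y \<in> U \<Longrightarrow> (g w has_derivative blinfun_apply (g' w y)) (at y)"
    and cg: "continuous_on (UNIV \<times> U) (\<lambda>(w, y). g w y)"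
    and cg': "continuous_on (UNIV \<times> U) (\<lambda>(w, y). g' w y)"
    and geq: "\<And>w y. y \<in> M \<Longrightarrow> g w y = fam w y"
    and MUi: "M \<subseteq> Ui" and deri: "\<And>w y. y \<in> Ui \<Longrightarrow> (gi w has_derivative blinfun_apply (gi' w y)) (at y)"
    and cgi: "continuous_on (UNIV \<times> Ui) (\<lambda>(w, y). gi w y)"
    and cgi': "continuous_on (UNIV \<times> Ui) (\<lambda>(w, y). gi' w y)"
    and gieq: "\<And>w y. y \<in> M \<Longrightarrow> gi w y = inv_into M (fam w) y"
    and split: "invariant_splitting M fam ({\<omega>. \<forall>i. \<omega> i \<in> S} \<times> M) Ecu Ecs"
begin

definition X :: "((int \<Rightarrow> 'w) \<times> 'a) set" where "X = {\<omega>. \<forall>i. \<omega> i \<in> S} \<times> M"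

definition cs where
  "cs l p = opnorm_on (tmap M (fwd fam (fst p) l) (snd p)) (Ecs (fst p) (snd p))"
definition cu where
  "cu l p = opnorm_on (tmap M (bwd M fam (fst p) l) (snd p)) (Ecu (fst p) (snd p))"

abbreviation "ifam \<equiv> (\<lambda>w. inv_into M (fam w))"
abbreviation "bidx \<equiv> (\<lambda>n::nat. - int (Suc n))"

lemma hM: "y \<in> M \<Longrightarrow> fam w y \<in> M"
  using bij[of w] by (simp add: bij_betw_apply)

lemma hiM: "y \<in> M \<Longrightarrow> inv_into M (fam w) y \<in> M"
  using bij[of w] by (metis bij_betw_def inv_into_into)

lemma compact_X: "compact X"
proof -
  have "{\<omega>::int \<Rightarrow> 'w. \<forall>i. \<omega> i \<in> S} = PiE UNIV (\<lambda>_. S)" by (auto simp: PiE_def Pi_def)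
  moreover have "compactin (product_topology (\<lambda>_. euclidean) UNIV) (PiE UNIV (\<lambda>_::int. S))"
    using cS by (simp add: compactin_PiE compactin_euclidean_iff)
  ultimately have "compact {\<omega>::int \<Rightarrow> 'w. \<forall>i. \<omega> i \<in> S}"
    by (simp add: euclidean_product_topology compactin_euclidean_iff)
  then show ?thesis unfolding X_def using compact_Times[OF _ cM] by blast
qed

lemma closed_X: "closed X" using compact_imp_closed[OF compact_X] .

lemma skew_X: "p \<in> X \<Longrightarrow> skew fam p \<in> X"
  by (auto simp: X_def skew_def shift_def hM)

lemma skew_inv_X: "p \<in> X \<Longrightarrow> skew_inv M fam p \<in> X"
  by (auto simp: X_def skew_inv_def shift_inv_def hiM)

lemma skew_inv_skew: "p \<in> X \<Longrightarrow> skew_inv M fam (skew fam p) = p"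
proof -
  assume p: "p \<in> X"
  obtain \<omega> x where px: "p = (\<omega>, x)" by (cases p)
  have x: "x \<in> M" using p px by (auto simp: X_def)
  have inj: "inj_on (fam (\<omega> 0)) M" using bij[of "\<omega> 0"] by (simp add: bij_betw_def)
  have "shift_inv (shift \<omega>) = \<omega>" by (simp add: shift_inv_def shift_def)
  moreover have "shift \<omega> (-1) = \<omega> 0" by (simp add: shift_def)
  ultimately show ?thesis using px x inj by (simp add: skew_def skew_inv_def inv_into_f_f)
qed

lemma skew_skew_inv: "p \<in> X \<Longrightarrow> skew fam (skew_inv M fam p) = p"
proof -
  assume p: "p \<in> X"
  obtain \<omega> x where px: "p = (\<omega>, x)" by (cases p)
  have x: "x \<in> M" using p px by (auto simp: X_def)
  have surj: "x \<in> fam (\<omega> (-1)) ` M" using bij[of "\<omega> (-1)"] x by (simp add: bij_betw_def)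
  have "shift (shift_inv \<omega>) = \<omega>" by (simp add: shift_inv_def shift_def)
  moreover have "shift_inv \<omega> 0 = \<omega> (-1)" by (simp add: shift_inv_def)
  ultimately show ?thesis using px surj by (simp add: skew_def skew_inv_def f_inv_into_f)
qed

lemma X_sub: "X \<subseteq> UNIV \<times> M" by (auto simp: X_def)

lemma cont_skew: "continuous_on X (skew fam)"
proof -
  have c1: "continuous_on X (\<lambda>p. shift (fst p))"
    by (rule continuous_on_coordinatewise_then_product) (simp add: shift_def cont_coord)
  have "continuous_on (UNIV \<times> M) (\<lambda>p. itr fam int (fst p) 1 (snd p))"
    by (rule cont_itr[OF hM MU cg geq])
  then have c2: "continuous_on X (\<lambda>p. itr fam int (fst p) 1 (snd p))"
    by (rule continuous_on_subset[OF _ X_sub]) 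
  then have c2: "continuous_on X (\<lambda>p. fam (fst p 0) (snd p))" by simp
  have "continuous_on X (\<lambda>p. (shift (fst p), fam (fst p 0) (snd p)))"
    by (rule continuous_on_Pair[OF c1 c2])
  then show ?thesis unfolding skew_def[abs_def] .
qed

lemma cont_skew_inv: "continuous_on X (skew_inv M fam)"
proof -
  have c1: "continuous_on X (\<lambda>p. shift_inv (fst p))"
    by (rule continuous_on_coordinatewise_then_product) (simp add: shift_inv_def cont_coord)
  have "continuous_on (UNIV \<times> M) (\<lambda>p. itr ifam bidx (fst p) 1 (snd p))"
    by (rule cont_itr[OF hiM MUi cgi gieq])
  then have c2: "continuous_on X (\<lambda>p. itr ifam bidx (fst p) 1 (snd p))"
    by (rule continuous_on_subset[OF _ X_sub]) 
  then have c2: "continuous_on X (\<lambda>p. inv_into M (fam (fst p (-1))) (snd p))" by simp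
  have "continuous_on X (\<lambda>p. (shift_inv (fst p), inv_into M (fam (fst p (-1))) (snd p)))"
    by (rule continuous_on_Pair[OF c1 c2])
  then show ?thesis unfolding skew_inv_def[abs_def] .
qed


lemma X_split: "X = {\<omega>. \<forall>i. \<omega> i \<in> S} \<times> M" by (simp add: X_def)

lemma E_props:
  assumes p: "p \<in> X"
  shows "subspace (Ecs (fst p) (snd p))" "Ecs (fst p) (snd p) \<subseteq> tangent_space M (snd p)"
    "subspace (Ecu (fst p) (snd p))" "Ecu (fst p) (snd p) \<subseteq> tangent_space M (snd p)"
proof -
  obtain \<omega> x where px: "p = (\<omega>, x)" by (cases p)
  have d: "direct_sum_tangent M x (Ecu \<omega> x) (Ecs \<omega> x)"
    using split p px unfolding invariant_splitting_def X_def by auto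
  then have s1: "subspace (Ecu \<omega> x)" and s2: "subspace (Ecs \<omega> x)"
    and T: "{u + v | u v. u \<in> Ecu \<omega> x \<and> v \<in> Ecs \<omega> x} = tangent_space M x"
    unfolding direct_sum_tangent_def by auto
  show "subspace (Ecs (fst p) (snd p))" "subspace (Ecu (fst p) (snd p))" using s1 s2 px by auto
  show "Ecs (fst p) (snd p) \<subseteq> tangent_space M (snd p)"
  proof
    fix v assume "v \<in> Ecs (fst p) (snd p)"
    then have "v \<in> Ecs \<omega> x" using px by simp
    then have "0 + v \<in> {u + w | u w. u \<in> Ecu \<omega> x \<and> w \<in> Ecs \<omega> x}" using s1 subspace_0 by blast
    then show "v \<in> tangent_space M (snd p)" using T px by simp
  qed
  show "Ecu (fst p) (snd p) \<subseteq> tangent_space M (snd p)"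
  proof
    fix v assume "v \<in> Ecu (fst p) (snd p)"
    then have "v \<in> Ecu \<omega> x" using px by simp
    then have "v + 0 \<in> {u + w | u w. u \<in> Ecu \<omega> x \<and> w \<in> Ecs \<omega> x}" using s2 subspace_0 by blast
    then show "v \<in> tangent_space M (snd p)" using T px by simp
  qed
qed

lemma X_M: "p \<in> X \<Longrightarrow> snd p \<in> M" by (auto simp: X_def)
lemma X_S: "p \<in> X \<Longrightarrow> fst p i \<in> S" by (auto simp: X_def)

lemma cs_eq:
  assumes p: "p \<in> X"
  shows "cs l p = norm (dit g' fam int (fst p) l (snd p) o\<^sub>L projb (Ecs (fst p) (snd p)))"
proof -
  have "cs l p = opnorm_on (tmap M (itr fam int (fst p) l) (snd p)) (Ecs (fst p) (snd p))"
    unfolding cs_def fwd_itr ..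
  also have "\<dots> = opnorm_on (blinfun_apply (dit g' fam int (fst p) l (snd p))) (Ecs (fst p) (snd p))"
    by (rule opnorm_on_cong, rule tmap_itr[OF hM MU der geq X_M[OF p]])
       (use E_props(2)[OF p] in auto)
  also have "\<dots> = norm (dit g' fam int (fst p) l (snd p) o\<^sub>L projb (Ecs (fst p) (snd p)))"
    by (rule opnorm_on_eq[OF E_props(1)[OF p]])
  finally show ?thesis .
qed

lemma cu_eq:
  assumes p: "p \<in> X"
  shows "cu l p = norm (dit gi' ifam bidx (fst p) l (snd p) o\<^sub>L projb (Ecu (fst p) (snd p)))"
proof -
  have "cu l p = opnorm_on (tmap M (itr ifam bidx (fst p) l) (snd p)) (Ecu (fst p) (snd p))"
    unfolding cu_def bwd_itr ..
  also have "\<dots> = opnorm_on (blinfun_apply (dit gi' ifam bidx (fst p) l (snd p))) (Ecu (fst p) (snd p))"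
    by (rule opnorm_on_cong, rule tmap_itr[OF hiM MUi deri gieq X_M[OF p]])
       (use E_props(4)[OF p] in auto)
  also have "\<dots> = norm (dit gi' ifam bidx (fst p) l (snd p) o\<^sub>L projb (Ecu (fst p) (snd p)))"
    by (rule opnorm_on_eq[OF E_props(3)[OF p]])
  finally show ?thesis .
qed

lemma cont_projb_gen:
  assumes sub: "\<And>p. p \<in> X \<Longrightarrow> subspace (E p)"
    and c: "\<And>v. continuous_on X (\<lambda>p. orth_proj (E p) v)"
  shows "continuous_on X (\<lambda>p. projb (E p))"
proof -
  have ci: "continuous_on X (\<lambda>p. blinfun_apply (projb (E p)) v)" for v
    by (rule continuous_on_cong[THEN iffD1, OF refl _ c[of v]]) (simp add: projb_apply sub)
  show ?thesis unfolding continuous_on_eq_continuous_within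
  proof
    fix p assume "p \<in> X"
    show "continuous (at p within X) (\<lambda>p. projb (E p))"
      by (rule continuous_blinfun_componentwiseI1)
         (use ci \<open>p \<in> X\<close> in \<open>auto simp: continuous_on_eq_continuous_within\<close>)
  qed
qed

lemma cont_projb_cs: "continuous_on X (\<lambda>p. projb (Ecs (fst p) (snd p)))"
proof (rule cont_projb_gen)
  show "subspace (Ecs (fst p) (snd p))" if "p \<in> X" for p using E_props(1)[OF that] .
  fix v
  have "continuous_on X (\<lambda>(\<omega>, x). orth_proj (Ecs \<omega> x) v)"
    using split unfolding invariant_splitting_def X_def by blast
  then show "continuous_on X (\<lambda>p. orth_proj (Ecs (fst p) (snd p)) v)"
    by (simp add: case_prod_beta')
qed

lemma cont_projb_cu: "continuous_on X (\<lambda>p. projb (Ecu (fst p) (snd p)))"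
proof (rule cont_projb_gen)
  show "subspace (Ecu (fst p) (snd p))" if "p \<in> X" for p using E_props(3)[OF that] .
  fix v
  have "continuous_on X (\<lambda>(\<omega>, x). orth_proj (Ecu \<omega> x) v)"
    using split unfolding invariant_splitting_def X_def by blast
  then show "continuous_on X (\<lambda>p. orth_proj (Ecu (fst p) (snd p)) v)"
    by (simp add: case_prod_beta')
qed

lemma cont_cs: "continuous_on X (cs l)"
proof -
  have d: "continuous_on X (\<lambda>p. dit g' fam int (fst p) l (snd p))"
    by (rule continuous_on_subset[OF cont_dit[OF hM MU cg cg' geq] X_sub])
  have c0: "continuous_on X (\<lambda>p. norm (dit g' fam int (fst p) l (snd p) o\<^sub>L projb (Ecs (fst p) (snd p))))"
    by (intro continuous_on_norm bounded_bilinear.continuous_on[OF bounded_bilinear_blinfun_compose] d cont_projb_cs)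
  have c: "continuous_on X (\<lambda>p. cs l p)" by (rule continuous_on_cong[THEN iffD1, OF refl _ c0]) (simp add: cs_eq)
  then show ?thesis by (simp add: eta_contract_eq)
qed

lemma cont_cu: "continuous_on X (cu l)"
proof -
  have d: "continuous_on X (\<lambda>p. dit gi' ifam bidx (fst p) l (snd p))"
    by (rule continuous_on_subset[OF cont_dit[OF hiM MUi cgi cgi' gieq] X_sub])
  have c0: "continuous_on X (\<lambda>p. norm (dit gi' ifam bidx (fst p) l (snd p) o\<^sub>L projb (Ecu (fst p) (snd p))))"
    by (intro continuous_on_norm bounded_bilinear.continuous_on[OF bounded_bilinear_blinfun_compose] d cont_projb_cu)
  have c: "continuous_on X (\<lambda>p. cu l p)" by (rule continuous_on_cong[THEN iffD1, OF refl _ c0]) (simp add: cu_eq)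
  then show ?thesis by (simp add: eta_contract_eq)
qed

lemma cs_nonneg: "p \<in> X \<Longrightarrow> 0 \<le> cs l p" by (simp add: cs_eq)
lemma cu_nonneg: "p \<in> X \<Longrightarrow> 0 \<le> cu l p" by (simp add: cu_eq)

lemma exK: "\<exists>K\<ge>1. \<forall>w\<in>S. \<forall>y\<in>M. norm (g' w y) \<le> K \<and> norm (gi' w y) \<le> K"
proof -
  have c1: "continuous_on (S \<times> M) (\<lambda>(w, y). g' w y)"
    by (rule continuous_on_subset[OF cg']) (use MU in auto)
  have c2: "continuous_on (S \<times> M) (\<lambda>(w, y). gi' w y)"
    by (rule continuous_on_subset[OF cgi']) (use MUi in auto)
  have k: "compact (S \<times> M)" using cS cM by (rule compact_Times)
  obtain B1 where B1: "\<And>z. z \<in> (\<lambda>(w, y). g' w y) ` (S \<times> M) \<Longrightarrow> norm z \<le> B1"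
    using compact_imp_bounded[OF compact_continuous_image[OF c1 k]] unfolding bounded_iff by blast
  obtain B2 where B2: "\<And>z. z \<in> (\<lambda>(w, y). gi' w y) ` (S \<times> M) \<Longrightarrow> norm z \<le> B2"
    using compact_imp_bounded[OF compact_continuous_image[OF c2 k]] unfolding bounded_iff by blast
  show ?thesis
    by (rule exI[where x="max 1 (max B1 B2)"]) (auto intro: order_trans[OF B1] order_trans[OF B2])
qed

lemma cs_le:
  assumes p: "p \<in> X" and K: "\<forall>w\<in>S. \<forall>y\<in>M. norm (g' w y) \<le> K" "1 \<le> K"
  shows "cs l p \<le> K ^ l"
proof -
  have "cs l p = opnorm_on (blinfun_apply (dit g' fam int (fst p) l (snd p))) (Ecs (fst p) (snd p))"
    using cs_eq[OF p] opnorm_on_eq[OF E_props(1)[OF p]] by simp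
  also have "\<dots> \<le> norm (dit g' fam int (fst p) l (snd p))" by (rule opnorm_on_le[OF E_props(1)[OF p]])
  also have "\<dots> \<le> K ^ l"
    by (rule norm_dit[OF hM, where S=S]) (use K p X_S X_M in auto)
  finally show ?thesis .
qed

lemma cu_le:
  assumes p: "p \<in> X" and K: "\<forall>w\<in>S. \<forall>y\<in>M. norm (gi' w y) \<le> K" "1 \<le> K"
  shows "cu l p \<le> K ^ l"
proof -
  have "cu l p = opnorm_on (blinfun_apply (dit gi' ifam bidx (fst p) l (snd p))) (Ecu (fst p) (snd p))"
    using cu_eq[OF p] opnorm_on_eq[OF E_props(3)[OF p]] by simp
  also have "\<dots> \<le> norm (dit gi' ifam bidx (fst p) l (snd p))" by (rule opnorm_on_le[OF E_props(3)[OF p]])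
  also have "\<dots> \<le> K ^ l"
    by (rule norm_dit[OF hiM, where S=S]) (use K p X_S X_M in auto)
  finally show ?thesis .
qed

end


lemma funpow_distr:
  assumes mT: "T \<in> measurable \<nu> \<nu>" and inv: "distr \<nu> \<nu> T = \<nu>"
  shows "distr \<nu> \<nu> (T ^^ l) = \<nu>"
proof (induction l)
  case 0
  then show ?case by (simp add: distr_id2 id_def)
next
  case (Suc l)
  have "distr \<nu> \<nu> (T ^^ Suc l) = distr (distr \<nu> \<nu> (T ^^ l)) \<nu> T"
    by (simp add: distr_distr[OF mT funpow_measurable[OF mT]])
  also have "\<dots> = \<nu>" using Suc inv by simp
  finally show ?case .
qed

locale msys = sys M fam S Ecu Ecs U g g' Ui gi gi'
  for M :: "'a::euclidean_space set" and fam :: "'w::metric_space \<Rightarrow> 'a \<Rightarrow> 'a"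
    and S :: "'w set" and Ecu Ecs :: "(int \<Rightarrow> 'w) \<Rightarrow> 'a \<Rightarrow> 'a set"
    and U :: "'a set" and g :: "'w \<Rightarrow> 'a \<Rightarrow> 'a" and g' :: "'w \<Rightarrow> 'a \<Rightarrow> 'a \<Rightarrow>\<^sub>L 'a"
    and Ui :: "'a set" and gi :: "'w \<Rightarrow> 'a \<Rightarrow> 'a" and gi' :: "'w \<Rightarrow> 'a \<Rightarrow> 'a \<Rightarrow>\<^sub>L 'a" +
  fixes \<mu>s :: "nat \<Rightarrow> ((int \<Rightarrow> 'w) \<times> 'a) measure" and \<mu> :: "((int \<Rightarrow> 'w) \<times> 'a) measure"
  assumes mus_prob: "\<And>n. prob_space (\<mu>s n)" and mus_sets: "\<And>n. sets (\<mu>s n) = sets borel"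
    and mus_X: "\<And>n. emeasure (\<mu>s n) X = 1"
    and mus_inv: "\<And>n A. A \<in> sets borel \<Longrightarrow> emeasure (\<mu>s n) (skew fam -` A \<inter> X) = emeasure (\<mu>s n) A"
    and mu_prob: "prob_space \<mu>" and mu_sets: "sets \<mu> = sets borel" and mu_X: "emeasure \<mu> X = 1"
    and conv: "weak_star_conv \<mu>s \<mu>"
begin

definition Tf where "Tf p = (if p \<in> X then skew fam p else p)"
definition Tb where "Tb p = (if p \<in> X then skew_inv M fam p else p)"
definition cf where "cf l p = (if p \<in> X then cs l p else 0)"
definition cb where "cb l p = (if p \<in> X then cu l p else 0)"

lemma space_mus: "space (\<mu>s n) = UNIV"
  using sets_eq_imp_space_eq[OF mus_sets[of n]] by simp

lemma space_mu: "space \<mu> = UNIV"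
  using sets_eq_imp_space_eq[OF mu_sets] by simp

lemma X_borel: "X \<in> sets borel" by (rule borel_closed[OF closed_X])

lemma Tf_meas: "Tf \<in> borel_measurable borel"
  unfolding Tf_def[abs_def] by (rule borel_measurable_continuous_on_if[OF X_borel cont_skew continuous_on_id])

lemma Tb_meas: "Tb \<in> borel_measurable borel"
  unfolding Tb_def[abs_def] by (rule borel_measurable_continuous_on_if[OF X_borel cont_skew_inv continuous_on_id])

lemma meas_cong: "f \<in> borel_measurable borel \<Longrightarrow> f \<in> measurable (\<mu>s n) (\<mu>s n)"
  using measurable_cong_sets[OF mus_sets[of n] mus_sets[of n]] by simp

lemma cf_meas: "cf l \<in> borel_measurable borel"
  unfolding cf_def[abs_def] by (rule borel_measurable_continuous_on_if[OF X_borel cont_cs continuous_on_const])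

lemma cb_meas: "cb l \<in> borel_measurable borel"
  unfolding cb_def[abs_def] by (rule borel_measurable_continuous_on_if[OF X_borel cont_cu continuous_on_const])

lemma nullX: "- X \<in> null_sets (\<mu>s n)"
proof -
  interpret prob_space "\<mu>s n" by (rule mus_prob)
  have XS: "X \<in> sets (\<mu>s n)" using X_borel mus_sets by simp
  have "measure (\<mu>s n) (space (\<mu>s n) - X) = 1 - measure (\<mu>s n) X" by (rule prob_compl[OF XS])
  also have "measure (\<mu>s n) X = 1" using mus_X[of n] by (simp add: emeasure_eq_measure)
  finally have "measure (\<mu>s n) (- X) = 0" by (simp add: space_mus Compl_eq_Diff_UNIV)
  moreover have "- X \<in> sets (\<mu>s n)" using XS by (metis Compl_eq_Diff_UNIV sets.compl_sets space_mus)
  ultimately show ?thesis by (simp add: emeasure_eq_measure null_sets_def)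
qed

lemma null_part: "A \<in> sets borel \<Longrightarrow> A \<inter> - X \<in> null_sets (\<mu>s n)"
  by (rule null_sets_subset[OF nullX]) (use X_borel mus_sets in auto)

lemma emeasure_IntX: "A \<in> sets borel \<Longrightarrow> emeasure (\<mu>s n) (A \<inter> X) = emeasure (\<mu>s n) A"
proof -
  assume A: "A \<in> sets borel"
  have "A = (A \<inter> X) \<union> (A \<inter> - X)" by auto
  then have "emeasure (\<mu>s n) A = emeasure (\<mu>s n) ((A \<inter> X) \<union> (A \<inter> - X))" by simp
  also have "\<dots> = emeasure (\<mu>s n) (A \<inter> X)"
    by (rule emeasure_Un_null_set) (use A X_borel mus_sets null_part[OF A] in auto)
  finally show ?thesis by simp
qed

lemma Tf_inv: "distr (\<mu>s n) (\<mu>s n) Tf = \<mu>s n"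
proof (rule measure_eqI)
  show "sets (distr (\<mu>s n) (\<mu>s n) Tf) = sets (\<mu>s n)" by simp
  fix A assume "A \<in> sets (distr (\<mu>s n) (\<mu>s n) Tf)"
  then have A': "A \<in> sets (\<mu>s n)" by simp
  then have A: "A \<in> sets borel" using mus_sets by simp
  have TA: "Tf -` A \<in> sets borel" using measurable_sets[OF Tf_meas A] by (simp add: space_borel)
  have eq: "Tf -` A = (skew fam -` A \<inter> X) \<union> (A \<inter> - X)" by (rule set_eqI) (simp add: Tf_def split: if_split)
  have eq2: "skew fam -` A \<inter> X = Tf -` A \<inter> X" by (auto simp: Tf_def)
  have m: "skew fam -` A \<inter> X \<in> sets (\<mu>s n)" unfolding eq2 using TA X_borel mus_sets by auto
  have "emeasure (distr (\<mu>s n) (\<mu>s n) Tf) A = emeasure (\<mu>s n) (Tf -` A \<inter> space (\<mu>s n))"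
    by (rule emeasure_distr[OF meas_cong[OF Tf_meas] A'])
  also have "\<dots> = emeasure (\<mu>s n) ((skew fam -` A \<inter> X) \<union> (A \<inter> - X))" by (simp add: space_mus eq)
  also have "\<dots> = emeasure (\<mu>s n) (skew fam -` A \<inter> X)"
    by (rule emeasure_Un_null_set[OF m null_part[OF A]])
  also have "\<dots> = emeasure (\<mu>s n) A" by (rule mus_inv[OF A])
  finally show "emeasure (distr (\<mu>s n) (\<mu>s n) Tf) A = emeasure (\<mu>s n) A" .
qed

lemma Tb_inv: "distr (\<mu>s n) (\<mu>s n) Tb = \<mu>s n"
proof (rule measure_eqI)
  show "sets (distr (\<mu>s n) (\<mu>s n) Tb) = sets (\<mu>s n)" by simp
  fix A assume "A \<in> sets (distr (\<mu>s n) (\<mu>s n) Tb)"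
  then have A': "A \<in> sets (\<mu>s n)" by simp
  then have A: "A \<in> sets borel" using mus_sets by simp
  have TA: "Tb -` A \<in> sets borel" using measurable_sets[OF Tb_meas A] by (simp add: space_borel)
  have eq: "Tb -` A = (skew_inv M fam -` A \<inter> X) \<union> (A \<inter> - X)" by (rule set_eqI) (simp add: Tb_def split: if_split)
  have eq2: "skew_inv M fam -` A \<inter> X = Tb -` A \<inter> X" by (auto simp: Tb_def)
  have mB: "skew_inv M fam -` A \<inter> X \<in> sets borel" unfolding eq2 using TA X_borel by auto
  then have m: "skew_inv M fam -` A \<inter> X \<in> sets (\<mu>s n)" using mus_sets by simp
  have eq3: "skew fam -` (skew_inv M fam -` A \<inter> X) \<inter> X = A \<inter> X"
  proof (rule set_eqI)
    fix p
    show "p \<in> skew fam -` (skew_inv M fam -` A \<inter> X) \<inter> X \<longleftrightarrow> p \<in> A \<inter> X"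
      using skew_X[of p] skew_inv_skew[of p] by auto
  qed
  have "emeasure (distr (\<mu>s n) (\<mu>s n) Tb) A = emeasure (\<mu>s n) (Tb -` A \<inter> space (\<mu>s n))"
    by (rule emeasure_distr[OF meas_cong[OF Tb_meas] A'])
  also have "\<dots> = emeasure (\<mu>s n) ((skew_inv M fam -` A \<inter> X) \<union> (A \<inter> - X))" by (simp add: space_mus eq)
  also have "\<dots> = emeasure (\<mu>s n) (skew_inv M fam -` A \<inter> X)"
    by (rule emeasure_Un_null_set[OF m null_part[OF A]])
  also have "\<dots> = emeasure (\<mu>s n) (skew fam -` (skew_inv M fam -` A \<inter> X) \<inter> X)"
    by (rule mus_inv[OF mB, symmetric])
  also have "\<dots> = emeasure (\<mu>s n) A" unfolding eq3 by (rule emeasure_IntX[OF A])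
  finally show "emeasure (distr (\<mu>s n) (\<mu>s n) Tb) A = emeasure (\<mu>s n) A" .
qed

lemma Tf_iter: "p \<in> X \<Longrightarrow> (Tf ^^ k) p = (skew fam ^^ k) p \<and> (skew fam ^^ k) p \<in> X"
  by (induction k) (auto simp: Tf_def skew_X)

lemma Tb_iter: "p \<in> X \<Longrightarrow> (Tb ^^ k) p = (skew_inv M fam ^^ k) p \<and> (skew_inv M fam ^^ k) p \<in> X"
  by (induction k) (auto simp: Tb_def skew_inv_X)


definition Ff where
  "Ff \<alpha> l = {p. \<exists>m. exp (- (\<alpha> * real l) * real m) < (\<Prod>i<m. cf l (((Tf ^^ l) ^^ i) p))}"
definition Fb where
  "Fb \<alpha> l = {p. \<exists>m. exp (- (\<alpha> * real l) * real m) < (\<Prod>i<m. cb l (((Tb ^^ l) ^^ i) p))}"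

lemma prod_f:
  assumes p: "p \<in> X"
  shows "(\<Prod>i<m. let q = (skew fam ^^ (i * l)) p in
            opnorm_on (tmap M (fwd fam (fst q) l) (snd q)) (Ecs (fst q) (snd q)))
       = (\<Prod>i<m. cf l (((Tf ^^ l) ^^ i) p))"
proof (rule prod.cong[OF refl])
  fix i
  have e: "((Tf ^^ l) ^^ i) p = (skew fam ^^ (i * l)) p" "(skew fam ^^ (i * l)) p \<in> X"
    using Tf_iter[OF p, of "l * i"] by (simp_all add: funpow_mult mult.commute)
  show "(let q = (skew fam ^^ (i * l)) p in opnorm_on (tmap M (fwd fam (fst q) l) (snd q)) (Ecs (fst q) (snd q)))
        = cf l (((Tf ^^ l) ^^ i) p)"
    using e by (simp add: Let_def cf_def cs_def)
qed

lemma prod_b: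
  assumes p: "p \<in> X"
  shows "(\<Prod>i<m. let q = (skew_inv M fam ^^ (i * l)) p in
            opnorm_on (tmap M (bwd M fam (fst q) l) (snd q)) (Ecu (fst q) (snd q)))
       = (\<Prod>i<m. cb l (((Tb ^^ l) ^^ i) p))"
proof (rule prod.cong[OF refl])
  fix i
  have e: "((Tb ^^ l) ^^ i) p = (skew_inv M fam ^^ (i * l)) p" "(skew_inv M fam ^^ (i * l)) p \<in> X"
    using Tb_iter[OF p, of "l * i"] by (simp_all add: funpow_mult mult.commute)
  show "(let q = (skew_inv M fam ^^ (i * l)) p in opnorm_on (tmap M (bwd M fam (fst q) l) (snd q)) (Ecu (fst q) (snd q)))
        = cb l (((Tb ^^ l) ^^ i) p)"
    using e by (simp add: Let_def cb_def cu_def)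
qed

lemma hyp_eq: "hyp_block M fam X Ecu Ecs l \<alpha> = X - (Ff \<alpha> l \<union> Fb \<alpha> l)"
proof (rule set_eqI)
  fix p
  have ex: "exp (- \<alpha> * real l * real m) = exp (- (\<alpha> * real l) * real m)" for m by simp
  show "p \<in> hyp_block M fam X Ecu Ecs l \<alpha> \<longleftrightarrow> p \<in> X - (Ff \<alpha> l \<union> Fb \<alpha> l)"
  proof (cases "p \<in> X")
    case True
    show ?thesis unfolding hyp_block_def Ff_def Fb_def using True
      by (simp add: prod_f[OF True] prod_b[OF True] ex not_less all_conj_distrib del: mult_minus_left)
  next
    case False then show ?thesis unfolding hyp_block_def by simp
  qed
qed

lemma Ff_meas: "Ff \<alpha> l \<in> sets borel"
proof -
  have mi: "(\<lambda>p. cf l (((Tf ^^ l) ^^ i) p)) \<in> borel_measurable borel" for i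
    by (rule measurable_compose[OF funpow_measurable[OF funpow_measurable[OF Tf_meas]] cf_meas])
  have "Ff \<alpha> l = (\<Union>m. {p \<in> space borel. exp (- (\<alpha> * real l) * real m) < (\<Prod>i<m. cf l (((Tf ^^ l) ^^ i) p))})"
    unfolding Ff_def by (auto simp: space_borel)
  also have "\<dots> \<in> sets borel"
  proof (rule sets.countable_UN)
    have "{p \<in> space borel. exp (- (\<alpha> * real l) * real m) < (\<Prod>i<m. cf l (((Tf ^^ l) ^^ i) p))} \<in> sets borel" for m
      by (intro borel_measurable_less borel_measurable_const borel_measurable_prod mi)
    then show "range (\<lambda>m. {p \<in> space borel. exp (- (\<alpha> * real l) * real m) < (\<Prod>i<m. cf l (((Tf ^^ l) ^^ i) p))}) \<subseteq> sets borel"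
      by blast
  qed
  finally show ?thesis .
qed

lemma Fb_meas: "Fb \<alpha> l \<in> sets borel"
proof -
  have mi: "(\<lambda>p. cb l (((Tb ^^ l) ^^ i) p)) \<in> borel_measurable borel" for i
    by (rule measurable_compose[OF funpow_measurable[OF funpow_measurable[OF Tb_meas]] cb_meas])
  have "Fb \<alpha> l = (\<Union>m. {p \<in> space borel. exp (- (\<alpha> * real l) * real m) < (\<Prod>i<m. cb l (((Tb ^^ l) ^^ i) p))})"
    unfolding Fb_def by (auto simp: space_borel)
  also have "\<dots> \<in> sets borel"
  proof (rule sets.countable_UN)
    have "{p \<in> space borel. exp (- (\<alpha> * real l) * real m) < (\<Prod>i<m. cb l (((Tb ^^ l) ^^ i) p))} \<in> sets borel" for m
      by (intro borel_measurable_less borel_measurable_const borel_measurable_prod mi)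
    then show "range (\<lambda>m. {p \<in> space borel. exp (- (\<alpha> * real l) * real m) < (\<Prod>i<m. cb l (((Tb ^^ l) ^^ i) p))}) \<subseteq> sets borel"
      by blast
  qed
  finally show ?thesis .
qed

lemma cf_nonneg: "0 \<le> cf l p" by (simp add: cf_def cs_nonneg)
lemma cb_nonneg: "0 \<le> cb l p" by (simp add: cb_def cu_nonneg)

lemma block_lower:
  assumes K: "1 \<le> K" "\<forall>w\<in>S. \<forall>y\<in>M. norm (g' w y) \<le> K \<and> norm (gi' w y) \<le> K"
    and a: "0 < \<alpha>" "\<alpha> < \<beta>1" and l: "1 \<le> l"
  shows "ennreal (1 - (1 + (ln K + \<alpha>) / (\<beta>1 - \<alpha>)) *
            (measure (\<mu>s n) {p. exp (- (\<beta>1 * real l)) \<le> cf l p} + measure (\<mu>s n) {p. exp (- (\<beta>1 * real l)) \<le> cb l p}))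
         \<le> emeasure (\<mu>s n) (hyp_block M fam X Ecu Ecs l \<alpha>)"
proof -
  interpret prob_space "\<mu>s n" by (rule mus_prob)
  let ?Kc = "1 + (ln K + \<alpha>) / (\<beta>1 - \<alpha>)"
  have lpos: "0 < real l" using l by simp
  have ratio: "(ln (K ^ l) + \<alpha> * real l) / (\<beta>1 * real l - \<alpha> * real l) = (ln K + \<alpha>) / (\<beta>1 - \<alpha>)"
  proof -
    have "(ln (K ^ l) + \<alpha> * real l) / (\<beta>1 * real l - \<alpha> * real l) = (real l * (ln K + \<alpha>)) / (real l * (\<beta>1 - \<alpha>))"
      by (simp add: ln_realpow algebra_simps)
    also have "\<dots> = (ln K + \<alpha>) / (\<beta>1 - \<alpha>)" using lpos by simp
    finally show ?thesis .
  qed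
  have Kl: "1 \<le> K ^ l" using K by simp
  have cfm: "cf l \<in> borel_measurable (\<mu>s n)" using cf_meas measurable_cong_sets[OF mus_sets[of n] refl[of "sets (borel::real measure)"]] by simp
  have cbm: "cb l \<in> borel_measurable (\<mu>s n)" using cb_meas measurable_cong_sets[OF mus_sets[of n] refl[of "sets (borel::real measure)"]] by simp
  have cfle: "cf l p \<le> K ^ l" for p
    using cs_le[of p K l] K Kl by (auto simp: cf_def)
  have cble: "cb l p \<le> K ^ l" for p
    using cu_le[of p K l] K Kl by (auto simp: cb_def)
  have ef: "measure (\<mu>s n) (Ff \<alpha> l) \<le> ?Kc * measure (\<mu>s n) {p. exp (- (\<beta>1 * real l)) \<le> cf l p}"
    using block_estimate[OF mus_prob funpow_measurable[OF meas_cong[OF Tf_meas]]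
        funpow_distr[OF meas_cong[OF Tf_meas] Tf_inv] cfm cf_nonneg cfle Kl, of "\<alpha> * real l" "\<beta>1 * real l"]
      a lpos by (simp add: ratio space_mus Ff_def)
  have eb: "measure (\<mu>s n) (Fb \<alpha> l) \<le> ?Kc * measure (\<mu>s n) {p. exp (- (\<beta>1 * real l)) \<le> cb l p}"
    using block_estimate[OF mus_prob funpow_measurable[OF meas_cong[OF Tb_meas]]
        funpow_distr[OF meas_cong[OF Tb_meas] Tb_inv] cbm cb_nonneg cble Kl, of "\<alpha> * real l" "\<beta>1 * real l"]
      a lpos by (simp add: ratio space_mus Fb_def)
  have XS: "X \<in> sets (\<mu>s n)" using X_borel mus_sets by simp
  have FfS: "Ff \<alpha> l \<in> sets (\<mu>s n)" using Ff_meas mus_sets by simp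
  have FbS: "Fb \<alpha> l \<in> sets (\<mu>s n)" using Fb_meas mus_sets by simp
  have X1: "measure (\<mu>s n) X = 1" using mus_X[of n] by (simp add: emeasure_eq_measure)
  let ?F = "Ff \<alpha> l \<union> Fb \<alpha> l"
  let ?A = "measure (\<mu>s n) {p. exp (- (\<beta>1 * real l)) \<le> cf l p}"
  let ?B = "measure (\<mu>s n) {p. exp (- (\<beta>1 * real l)) \<le> cb l p}"
  have d: "measure (\<mu>s n) (X - ?F) = measure (\<mu>s n) X - measure (\<mu>s n) (X \<inter> ?F)"
    by (rule finite_measure_Diff') (use XS FfS FbS in auto)
  have m1: "measure (\<mu>s n) (X \<inter> ?F) \<le> measure (\<mu>s n) ?F"
    by (rule finite_measure_mono) (use FfS FbS in auto)
  have m2: "measure (\<mu>s n) ?F \<le> measure (\<mu>s n) (Ff \<alpha> l) + measure (\<mu>s n) (Fb \<alpha> l)"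
    by (rule measure_Un_le[OF FfS FbS])
  have dist: "?Kc * (?A + ?B) = ?Kc * ?A + ?Kc * ?B" by (simp add: distrib_left)
  have "1 - ?Kc * (?A + ?B) \<le> measure (\<mu>s n) (X - ?F)"
    using d m1 m2 ef eb X1 dist by linarith
  then have "1 - ?Kc * (?A + ?B) \<le> measure (\<mu>s n) (hyp_block M fam X Ecu Ecs l \<alpha>)"
    unfolding hyp_eq .
  then show ?thesis by (simp add: emeasure_eq_measure)
qed

end


lemma urysohn_metric:
  fixes A B :: "'b::metric_space set"
  assumes A: "closed A" and B: "closed B" and AB: "A \<inter> B = {}"
  obtains u :: "'b \<Rightarrow> real" where "continuous_on UNIV u" "\<And>p. 0 \<le> u p \<and> u p \<le> 1"
    "\<And>p. p \<in> A \<Longrightarrow> u p = 1" "\<And>p. p \<in> B \<Longrightarrow> u p = 0"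
proof (cases "A = {}")
  case True
  show ?thesis by (rule that[of "\<lambda>_. 0"]) (use True in auto)
next
  case An: False
  show ?thesis
  proof (cases "B = {}")
    case True
    show ?thesis by (rule that[of "\<lambda>_. 1"]) (use True in auto)
  next
    case Bn: False
    have pos: "0 < infdist p A + infdist p B" for p
    proof -
      have "infdist p A \<noteq> 0 \<or> infdist p B \<noteq> 0"
        using in_closed_iff_infdist_zero[OF A An, of p] in_closed_iff_infdist_zero[OF B Bn, of p] AB by auto
      then show ?thesis using infdist_nonneg[of p A] infdist_nonneg[of p B] by linarith
    qed
    define u where "u p = infdist p B / (infdist p A + infdist p B)" for p
    show ?thesis
    proof (rule that[of u])
      have nz: "infdist p A + infdist p B \<noteq> 0" for p using pos[of p] by linarith
      show "continuous_on UNIV u" unfolding u_def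
        by (intro continuous_on_divide continuous_on_add continuous_on_infdist continuous_on_id) (use nz in auto)
      show "0 \<le> u p \<and> u p \<le> 1" for p
        using pos[of p] infdist_nonneg[of p A] infdist_nonneg[of p B] by (auto simp: u_def field_simps)
      show "u p = 1" if "p \<in> A" for p using that pos[of p] by (simp add: u_def infdist_zero)
      show "u p = 0" if "p \<in> B" for p using that by (simp add: u_def infdist_zero)
    qed
  qed
qed

lemma cutoff:
  fixes c :: "'b::metric_space \<Rightarrow> real"
  assumes cl: "closed X" and cc: "continuous_on X c" and e: "e2 < e1"
  obtains u :: "'b \<Rightarrow> real" where "continuous_on UNIV u" "\<And>p. 0 \<le> u p \<and> u p \<le> 1"
    "\<And>p. p \<in> X \<Longrightarrow> e1 \<le> c p \<Longrightarrow> u p = 1" "\<And>p. p \<in> X \<Longrightarrow> c p \<le> e2 \<Longrightarrow> u p = 0"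
proof -
  have cA: "closed (X \<inter> c -` {e1..})" by (rule continuous_closed_preimage[OF cc cl]) simp
  have cB: "closed (X \<inter> c -` {..e2})" by (rule continuous_closed_preimage[OF cc cl]) simp
  have d: "(X \<inter> c -` {e1..}) \<inter> (X \<inter> c -` {..e2}) = {}" using e by auto
  obtain u :: "'b \<Rightarrow> real" where u: "continuous_on UNIV u" "\<And>p. 0 \<le> u p \<and> u p \<le> 1"
    "\<And>p. p \<in> X \<inter> c -` {e1..} \<Longrightarrow> u p = 1" "\<And>p. p \<in> X \<inter> c -` {..e2} \<Longrightarrow> u p = 0"
    by (rule urysohn_metric[OF cA cB d]) blast
  show ?thesis
    by (rule that[of u]) (use u in auto)
qed

context msys
begin

lemma weak_transfer:
  fixes c :: "(int \<Rightarrow> 'w) \<times> 'a \<Rightarrow> real"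
  assumes cc: "continuous_on X c" and e: "e2 < e1" and e1: "0 < e1"
    and mc: "(\<lambda>p. if p \<in> X then c p else 0) \<in> borel_measurable borel"
  shows "\<And>\<eta>. 0 < \<eta> \<Longrightarrow> eventually (\<lambda>n. measure (\<mu>s n) {p. e1 \<le> (if p \<in> X then c p else 0)}
            < measure \<mu> {p. e2 < (if p \<in> X then c p else 0)} + \<eta>) sequentially"
proof -
  fix \<eta> :: real assume eta: "0 < \<eta>"
  define cx where "cx p = (if p \<in> X then c p else 0)" for p
  obtain u :: "(int \<Rightarrow> 'w) \<times> 'a \<Rightarrow> real" where u: "continuous_on UNIV u" "\<And>p. 0 \<le> u p \<and> u p \<le> 1"
    "\<And>p. p \<in> X \<Longrightarrow> e1 \<le> c p \<Longrightarrow> u p = 1" "\<And>p. p \<in> X \<Longrightarrow> c p \<le> e2 \<Longrightarrow> u p = 0"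
    using cutoff[OF closed_X cc e] by blast
  have bu: "bounded (range u)" using u(2) by (intro boundedI[where B=1]) auto
  have lim: "(\<lambda>n. integral\<^sup>L (\<mu>s n) u) \<longlonglongrightarrow> integral\<^sup>L \<mu> u"
    using conv u(1) bu unfolding weak_star_conv_def by blast
  have mu_b: "u \<in> borel_measurable borel" by (rule borel_measurable_continuous_onI[OF u(1)])
  have mus_u: "u \<in> borel_measurable (\<mu>s n)" for n
    using mu_b measurable_cong_sets[OF mus_sets[of n] refl[of "sets (borel::real measure)"]] by simp
  have mu_u: "u \<in> borel_measurable \<mu>"
    using mu_b measurable_cong_sets[OF mu_sets refl[of "sets (borel::real measure)"]] by simp
  have mcx: "cx \<in> borel_measurable borel" using mc unfolding cx_def[abs_def] .
  have B1: "{p. e1 \<le> cx p} \<in> sets borel"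
    using borel_measurable_le[OF borel_measurable_const mcx, of e1] by (simp add: space_borel)
  have B2: "{p. e2 < cx p} \<in> sets borel"
    using borel_measurable_less[OF borel_measurable_const mcx, of e2] by (simp add: space_borel)
  have h1: "measure (\<mu>s n) {p. e1 \<le> cx p} \<le> integral\<^sup>L (\<mu>s n) u" for n
  proof -
    interpret prob_space "\<mu>s n" by (rule mus_prob)
    have B1': "{p. e1 \<le> cx p} \<in> sets (\<mu>s n)" using B1 mus_sets by simp
    have "measure (\<mu>s n) {p. e1 \<le> cx p} = integral\<^sup>L (\<mu>s n) (indicator {p. e1 \<le> cx p})"
      using B1' by (simp add: emeasure_eq_measure)
    also have "\<dots> \<le> integral\<^sup>L (\<mu>s n) u"
    proof (rule integral_mono)
      show "integrable (\<mu>s n) (indicator {p. e1 \<le> cx p} :: _ \<Rightarrow> real)"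
        using B1' by (simp add: emeasure_eq_measure)
      show "integrable (\<mu>s n) u"
        by (rule integrable_const_bound[where B=1]) (use u(2) mus_u in auto)
      show "indicator {p. e1 \<le> cx p} x \<le> u x" for x
        using u(2)[of x] u(3)[of x] e1 by (auto simp: indicator_def cx_def split: if_splits)
    qed
    finally show ?thesis .
  qed
  have h2: "integral\<^sup>L \<mu> u \<le> measure \<mu> {p. e2 < cx p}"
  proof -
    interpret prob_space \<mu> by (rule mu_prob)
    have B2': "{p. e2 < cx p} \<in> sets \<mu>" using B2 mu_sets by simp
    have XS: "X \<in> sets \<mu>" using X_borel mu_sets by simp
    have aeX: "AE p in \<mu>. p \<in> X"
      using AE_in_set_eq_1[OF XS] mu_X by (simp add: emeasure_eq_measure)
    have "integral\<^sup>L \<mu> u \<le> integral\<^sup>L \<mu> (indicator {p. e2 < cx p})"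
    proof (rule integral_mono_AE)
      show "integrable \<mu> (indicator {p. e2 < cx p} :: _ \<Rightarrow> real)"
        using B2' by (simp add: emeasure_eq_measure)
      show "integrable \<mu> u"
        by (rule integrable_const_bound[where B=1]) (use u(2) mu_u in auto)
      show "AE x in \<mu>. u x \<le> indicator {p. e2 < cx p} x"
        using aeX
      proof eventually_elim
        case (elim x)
        then show ?case using u(2)[of x] u(4)[of x] by (auto simp: indicator_def cx_def not_less)
      qed
    qed
    also have "\<dots> = measure \<mu> {p. e2 < cx p}" using B2' by (simp add: emeasure_eq_measure)
    finally show ?thesis .
  qed
  have "eventually (\<lambda>n. integral\<^sup>L (\<mu>s n) u < integral\<^sup>L \<mu> u + \<eta>) sequentially"
    by (rule order_tendstoD(2)[OF lim]) (use eta in simp)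
  then show "eventually (\<lambda>n. measure (\<mu>s n) {p. e1 \<le> (if p \<in> X then c p else 0)}
            < measure \<mu> {p. e2 < (if p \<in> X then c p else 0)} + \<eta>) sequentially"
  proof eventually_elim
    case (elim n)
    then show ?case using h1[of n] h2 unfolding cx_def by linarith
  qed
qed


lemma lyap_limit:
  fixes c :: "nat \<Rightarrow> (int \<Rightarrow> 'w) \<times> 'a \<Rightarrow> real"
  assumes mc: "\<And>l. (\<lambda>p. if p \<in> X then c l p else 0) \<in> borel_measurable borel"
    and ae: "AE p in \<mu>. p \<in> X \<longrightarrow> (\<exists>L. L < - \<beta> \<and> (\<lambda>n. ln (c n p) / real n) \<longlonglongrightarrow> L)"
    and b2: "\<beta>2 < \<beta>"
  shows "(\<lambda>l. measure \<mu> {p. exp (- (\<beta>2 * real l)) < (if p \<in> X then c l p else 0)}) \<longlonglongrightarrow> 0"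
proof -
  interpret prob_space \<mu> by (rule mu_prob)
  define cx where "cx l p = (if p \<in> X then c l p else 0)" for l p
  define B where "B l = {p. exp (- (\<beta>2 * real l)) < cx l p}" for l
  have mcx: "cx l \<in> borel_measurable borel" for l using mc[of l] unfolding cx_def[abs_def] .
  have Bs: "B l \<in> sets \<mu>" for l
    using borel_measurable_less[OF borel_measurable_const mcx, of "exp (- (\<beta>2 * real l))" l] mu_sets
    by (simp add: space_borel B_def)
  have conv0: "(\<lambda>l. indicator (B l) p :: real) \<longlonglongrightarrow> 0"
    if p: "p \<in> X \<longrightarrow> (\<exists>L. L < - \<beta> \<and> (\<lambda>n. ln (c n p) / real n) \<longlonglongrightarrow> L)" for p
  proof (cases "p \<in> X")
    case False
    then have "indicator (B l) p = (0::real)" for l by (simp add: B_def cx_def indicator_def)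
    then show ?thesis by simp
  next
    case True
    then obtain L where L: "L < - \<beta>" "(\<lambda>n. ln (c n p) / real n) \<longlonglongrightarrow> L" using p by blast
    have ev: "eventually (\<lambda>n. ln (c n p) / real n < - \<beta>2) sequentially"
      by (rule order_tendstoD(2)[OF L(2)]) (use L(1) b2 in linarith)
    have "eventually (\<lambda>l. indicator (B l) p = (0::real)) sequentially"
      using ev eventually_ge_at_top[of 1]
    proof eventually_elim
      case (elim l)
      have lpos: "0 < real l" using elim(2) by simp
      show ?case
      proof (rule ccontr)
        assume "indicator (B l) p \<noteq> (0::real)"
        then have lt: "exp (- (\<beta>2 * real l)) < c l p" using True by (simp add: B_def cx_def indicator_def split: if_splits)
        then have cpos: "0 < c l p" using exp_gt_zero[of "- (\<beta>2 * real l)"] by linarith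
        have "ln (exp (- (\<beta>2 * real l))) < ln (c l p)" using lt cpos by (subst ln_less_cancel_iff) auto
        then have "- (\<beta>2 * real l) < ln (c l p)" by simp
        then have "- \<beta>2 < ln (c l p) / real l" using lpos by (simp add: field_simps)
        then show False using elim(1) by linarith
      qed
    qed
    then show ?thesis by (rule tendsto_eventually)
  qed
  have "(\<lambda>l. integral\<^sup>L \<mu> (\<lambda>p. indicator (B l) p :: real)) \<longlonglongrightarrow> integral\<^sup>L \<mu> (\<lambda>p. 0 :: real)"
  proof (rule integral_dominated_convergence[where w="\<lambda>_. 1"])
    show "(\<lambda>p. 0::real) \<in> borel_measurable \<mu>" by simp
    show "(\<lambda>p. indicator (B l) p :: real) \<in> borel_measurable \<mu>" for l using Bs by simp
    show "integrable \<mu> (\<lambda>_. 1::real)" by simp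
    show "AE p in \<mu>. (\<lambda>l. indicator (B l) p :: real) \<longlonglongrightarrow> 0"
      using ae by eventually_elim (rule conv0)
    show "AE p in \<mu>. norm (indicator (B l) p :: real) \<le> 1" for l by (simp add: indicator_def)
  qed
  moreover have "integral\<^sup>L \<mu> (\<lambda>p. indicator (B l) p :: real) = measure \<mu> (B l)" for l
    using Bs by (simp add: emeasure_eq_measure)
  ultimately show ?thesis unfolding B_def cx_def by simp
qed


lemma main_msys:
  assumes a0: "0 < \<alpha>" and ab: "\<alpha> < \<beta>"
    and lyap_s: "AE p in \<mu>. p \<in> X \<longrightarrow> (\<exists>L. L < - \<beta> \<and> (\<lambda>n. ln (cs n p) / real n) \<longlonglongrightarrow> L)"
    and lyap_u: "AE p in \<mu>. p \<in> X \<longrightarrow> (\<exists>L. L < - \<beta> \<and> (\<lambda>n. ln (cu n p) / real n) \<longlonglongrightarrow> L)"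
  shows "(\<lambda>l. liminf (\<lambda>n. emeasure (\<mu>s n) (hyp_block M fam X Ecu Ecs l \<alpha>))) \<longlonglongrightarrow> 1"
proof -
  define \<beta>1 where "\<beta>1 = (2 * \<alpha> + \<beta>) / 3"
  define \<beta>2 where "\<beta>2 = (\<alpha> + 2 * \<beta>) / 3"
  have b: "\<alpha> < \<beta>1" "\<beta>1 < \<beta>2" "\<beta>2 < \<beta>" using ab by (simp_all add: \<beta>1_def \<beta>2_def)
  obtain K where K: "1 \<le> K" "\<forall>w\<in>S. \<forall>y\<in>M. norm (g' w y) \<le> K \<and> norm (gi' w y) \<le> K"
    using exK by blast
  define Kc where "Kc = 1 + (ln K + \<alpha>) / (\<beta>1 - \<alpha>)"
  have Kc: "1 \<le> Kc" unfolding Kc_def using K(1) a0 b(1) by (simp add: divide_nonneg_pos)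
  define f where "f l = liminf (\<lambda>n. emeasure (\<mu>s n) (hyp_block M fam X Ecu Ecs l \<alpha>))" for l
  define Af where "Af l = measure \<mu> {p. exp (- (\<beta>2 * real l)) < (if p \<in> X then cs l p else 0)}" for l
  define Ab where "Ab l = measure \<mu> {p. exp (- (\<beta>2 * real l)) < (if p \<in> X then cu l p else 0)}" for l
  have mcs: "(\<lambda>p. if p \<in> X then cs l p else 0) \<in> borel_measurable borel" for l
    using cf_meas[of l] unfolding cf_def[abs_def] .
  have mcu: "(\<lambda>p. if p \<in> X then cu l p else 0) \<in> borel_measurable borel" for l
    using cb_meas[of l] unfolding cb_def[abs_def] .
  have Af0: "Af \<longlonglongrightarrow> 0" unfolding Af_def[abs_def] by (rule lyap_limit[OF mcs lyap_s b(3)])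
  have Ab0: "Ab \<longlonglongrightarrow> 0" unfolding Ab_def[abs_def] by (rule lyap_limit[OF mcu lyap_u b(3)])
  have low: "eventually (\<lambda>l. ennreal (1 - \<delta>) \<le> f l) sequentially" if d: "0 < \<delta>" for \<delta>
  proof -
    define \<epsilon> where "\<epsilon> = \<delta> / (2 * Kc)"
    have e: "0 < \<epsilon>" unfolding \<epsilon>_def using d Kc by simp
    have evf: "eventually (\<lambda>l. Af l < \<epsilon> / 2) sequentially" by (rule order_tendstoD(2)[OF Af0]) (use e in simp)
    have evb: "eventually (\<lambda>l. Ab l < \<epsilon> / 2) sequentially" by (rule order_tendstoD(2)[OF Ab0]) (use e in simp)
    show ?thesis using evf evb eventually_ge_at_top[of 1]
    proof eventually_elim
      case (elim l)
      note L = elim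
      have lpos: "0 < real l" using elim(3) by simp
      have e12: "exp (- (\<beta>2 * real l)) < exp (- (\<beta>1 * real l))" using b(2) lpos by simp
      have wf: "eventually (\<lambda>n. measure (\<mu>s n) {p. exp (- (\<beta>1 * real l)) \<le> (if p \<in> X then cs l p else 0)}
            < Af l + \<epsilon> / 2) sequentially"
        unfolding Af_def by (rule weak_transfer[OF cont_cs e12 exp_gt_zero mcs]) (use e in simp)
      have wb: "eventually (\<lambda>n. measure (\<mu>s n) {p. exp (- (\<beta>1 * real l)) \<le> (if p \<in> X then cu l p else 0)}
            < Ab l + \<epsilon> / 2) sequentially"
        unfolding Ab_def by (rule weak_transfer[OF cont_cu e12 exp_gt_zero mcu]) (use e in simp)
      have "eventually (\<lambda>n. ennreal (1 - \<delta>) \<le> emeasure (\<mu>s n) (hyp_block M fam X Ecu Ecs l \<alpha>)) sequentially"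
        using wf wb
      proof eventually_elim
        case (elim n)
        let ?A = "measure (\<mu>s n) {p. exp (- (\<beta>1 * real l)) \<le> cf l p}"
        let ?B = "measure (\<mu>s n) {p. exp (- (\<beta>1 * real l)) \<le> cb l p}"
        have A: "?A < \<epsilon>" using elim(1) L(1) unfolding cf_def by linarith
        have B: "?B < \<epsilon>" using elim(2) L(2) unfolding cb_def by linarith
        have "Kc * (?A + ?B) \<le> Kc * (2 * \<epsilon>)" using A B Kc by (intro mult_left_mono) auto
        also have "\<dots> = \<delta>" unfolding \<epsilon>_def using Kc by simp
        finally have "1 - \<delta> \<le> 1 - Kc * (?A + ?B)" by simp
        then have "ennreal (1 - \<delta>) \<le> ennreal (1 - Kc * (?A + ?B))" by (rule ennreal_leI)
        also have "\<dots> \<le> emeasure (\<mu>s n) (hyp_block M fam X Ecu Ecs l \<alpha>)"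
          using block_lower[OF K a0 b(1) L(3)] unfolding Kc_def by simp
        finally show ?case .
      qed
      then show ?case unfolding f_def by (rule Liminf_bounded)
    qed
  qed
  have up: "f l \<le> 1" for l
  proof -
    have "f l \<le> limsup (\<lambda>n. emeasure (\<mu>s n) (hyp_block M fam X Ecu Ecs l \<alpha>))"
      unfolding f_def by (rule Liminf_le_Limsup) simp
    also have "\<dots> \<le> 1"
      by (rule Limsup_bounded) (simp add: prob_space.emeasure_le_1[OF mus_prob])
    finally show ?thesis .
  qed
  have "f \<longlonglongrightarrow> 1"
  proof (rule order_tendstoI)
    fix y :: ennreal assume y: "y < 1"
    then have yt: "y \<noteq> top" by auto
    define r where "r = enn2real y"
    have yr: "y = ennreal r" using yt unfolding r_def by (cases y) auto
    have r0: "0 \<le> r" unfolding r_def by simp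
    have "ennreal r < ennreal 1" using y yr by simp
    then have r1: "r < 1" using ennreal_less_iff[OF r0, of 1] by blast
    have "eventually (\<lambda>l. ennreal (1 - (1 - r) / 2) \<le> f l) sequentially" by (rule low) (use r1 in simp)
    then show "eventually (\<lambda>l. y < f l) sequentially"
    proof eventually_elim
      case (elim l)
      have "y < ennreal (1 - (1 - r) / 2)" unfolding yr by (rule ennreal_lessI) (use r1 r0 in \<open>auto simp: field_simps\<close>)
      then show ?case using elim by (rule less_le_trans)
    qed
  next
    fix y :: ennreal assume "1 < y"
    then show "eventually (\<lambda>l. f l < y) sequentially" using up by (intro always_eventually allI) (blast intro: le_less_trans)
  qed
  then show ?thesis unfolding f_def .
qed

end


theorem theorem4p2:
  fixes M :: "'a::euclidean_space set"
    and fam :: "'w::metric_space \<Rightarrow> 'a \<Rightarrow> 'a"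
    and \<omega>f :: 'w
    and \<theta> :: "real \<Rightarrow> 'w measure"
    and \<epsilon>0 :: real
    and Ecu Ecs :: "(int \<Rightarrow> 'w) \<Rightarrow> 'a \<Rightarrow> 'a set"
    and \<alpha> \<beta> :: real
    and \<mu>s :: "nat \<Rightarrow> ((int \<Rightarrow> 'w) \<times> 'a) measure"
    and \<mu> :: "((int \<Rightarrow> 'w) \<times> 'a) measure"
  assumes M: "compact M" "C2_submanifold M"
    and rrp: "regular_random_perturbation M fam \<omega>f \<theta>"
    and dom: "\<exists>Fcu Fcs. dominated_splitting M (fam \<omega>f) Fcu Fcs"
    and eps0: "\<epsilon>0 > 0"
    and split: "invariant_splitting M fam (Omega \<theta> \<epsilon>0 \<times> M) Ecu Ecs"
    and ab: "0 < \<alpha>" "\<alpha> < \<beta>"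
    and mus_prob: "\<And>n. prob_space (\<mu>s n)" "\<And>n. sets (\<mu>s n) = sets borel"
    and mus_supp: "\<And>n. emeasure (\<mu>s n) (Omega \<theta> \<epsilon>0 \<times> M) = 1"
    and mus_inv: "\<And>n A. A \<in> sets borel \<Longrightarrow>
        emeasure (\<mu>s n) (skew fam -` A \<inter> (Omega \<theta> \<epsilon>0 \<times> M)) = emeasure (\<mu>s n) A"
    and mu_prob: "prob_space \<mu>" "sets \<mu> = sets borel"
    and mu_supp: "emeasure \<mu> (Omega \<theta> \<epsilon>0 \<times> M) = 1"
    and conv: "weak_star_conv \<mu>s \<mu>"
    and lyap: "AE p in \<mu>. p \<in> Omega \<theta> \<epsilon>0 \<times> M \<longrightarrow>
        (\<exists>L. L < - \<beta> \<and> (\<lambda>n. ln (opnorm_on (tmap M (fwd fam (fst p) n) (snd p))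
                                   (Ecs (fst p) (snd p))) / real n) \<longlonglongrightarrow> L) \<and>
        (\<exists>L. L < - \<beta> \<and> (\<lambda>n. ln (opnorm_on (tmap M (bwd M fam (fst p) n) (snd p))
                                   (Ecu (fst p) (snd p))) / real n) \<longlonglongrightarrow> L)"
  shows "(\<lambda>l. liminf (\<lambda>n. emeasure (\<mu>s n) (hyp_block M fam (Omega \<theta> \<epsilon>0 \<times> M) Ecu Ecs l \<alpha>)))
           \<longlonglongrightarrow> 1"
proof -
  let ?S = "msupport (\<theta> \<epsilon>0)"
  note rr = rrp[unfolded regular_random_perturbation_def]
  have diffeo: "\<forall>w. C2_diffeo M (fam w)" by (rule conjunct1[OF rr])
  have cf: "C2_continuous_family M fam" by (rule conjunct1[OF conjunct2[OF rr]])
  have cfi: "C2_continuous_family M (\<lambda>w. inv_into M (fam w))"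
    by (rule conjunct1[OF conjunct2[OF conjunct2[OF rr]]])
  have th: "\<forall>\<epsilon>>0. prob_space (\<theta> \<epsilon>) \<and> sets (\<theta> \<epsilon>) = sets borel \<and> compact (msupport (\<theta> \<epsilon>))"
    by (rule conjunct1[OF conjunct2[OF conjunct2[OF conjunct2[OF rr]]]])
  have bij: "\<And>w. bij_betw (fam w) M M" using diffeo unfolding C2_diffeo_def by blast
  have cS: "compact ?S" using th eps0 by blast
  obtain U g g' g'' where U: "open U" "M \<subseteq> U"
    and gd: "\<forall>\<omega> x. x \<in> U \<longrightarrow> (g \<omega> has_derivative blinfun_apply (g' \<omega> x)) (at x) \<and>
                      (g' \<omega> has_derivative blinfun_apply (g'' \<omega> x)) (at x)"
    and gc: "continuous_on (UNIV \<times> U) (\<lambda>(\<omega>, x). g \<omega> x)"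
    and gc': "continuous_on (UNIV \<times> U) (\<lambda>(\<omega>, x). g' \<omega> x)"
    and "continuous_on (UNIV \<times> U) (\<lambda>(\<omega>, x). g'' \<omega> x)"
    and geq: "\<forall>\<omega>. \<forall>x\<in>M. g \<omega> x = fam \<omega> x"
    using cf unfolding C2_continuous_family_def by blast
  obtain Ui gi gi' gi'' where Ui: "open Ui" "M \<subseteq> Ui"
    and gid: "\<forall>\<omega> x. x \<in> Ui \<longrightarrow> (gi \<omega> has_derivative blinfun_apply (gi' \<omega> x)) (at x) \<and>
                      (gi' \<omega> has_derivative blinfun_apply (gi'' \<omega> x)) (at x)"
    and gic: "continuous_on (UNIV \<times> Ui) (\<lambda>(\<omega>, x). gi \<omega> x)"
    and gic': "continuous_on (UNIV \<times> Ui) (\<lambda>(\<omega>, x). gi' \<omega> x)"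
    and "continuous_on (UNIV \<times> Ui) (\<lambda>(\<omega>, x). gi'' \<omega> x)"
    and gieq: "\<forall>\<omega>. \<forall>x\<in>M. gi \<omega> x = inv_into M (fam \<omega>) x"
    using cfi unfolding C2_continuous_family_def by blast
  have OmX: "Omega \<theta> \<epsilon>0 = {\<omega>. \<forall>i. \<omega> i \<in> ?S}" by (simp add: Omega_def)
  interpret sys M fam ?S Ecu Ecs U g g' Ui gi gi'
  proof
    show "compact M" by (rule M(1))
    show "compact ?S" by (rule cS)
    show "bij_betw (fam w) M M" for w by (rule bij)
    show "M \<subseteq> U" by (rule U(2))
    show "(g w has_derivative blinfun_apply (g' w y)) (at y)" if "y \<in> U" for w y using gd that by blast
    show "continuous_on (UNIV \<times> U) (\<lambda>(w, y). g w y)" by (rule gc)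
    show "continuous_on (UNIV \<times> U) (\<lambda>(w, y). g' w y)" by (rule gc')
    show "g w y = fam w y" if "y \<in> M" for w y using geq that by blast
    show "M \<subseteq> Ui" by (rule Ui(2))
    show "(gi w has_derivative blinfun_apply (gi' w y)) (at y)" if "y \<in> Ui" for w y using gid that by blast
    show "continuous_on (UNIV \<times> Ui) (\<lambda>(w, y). gi w y)" by (rule gic)
    show "continuous_on (UNIV \<times> Ui) (\<lambda>(w, y). gi' w y)" by (rule gic')
    show "gi w y = inv_into M (fam w) y" if "y \<in> M" for w y using gieq that by blast
    show "invariant_splitting M fam ({\<omega>. \<forall>i. \<omega> i \<in> ?S} \<times> M) Ecu Ecs" using split OmX by simp
  qed
  have XO: "X = Omega \<theta> \<epsilon>0 \<times> M" by (simp add: X_def OmX)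
  interpret msys M fam ?S Ecu Ecs U g g' Ui gi gi' \<mu>s \<mu>
  proof intro_locales
    show "msys_axioms M fam ?S \<mu>s \<mu>"
    proof (rule msys_axioms.intro)
      show "prob_space (\<mu>s n)" for n by (rule mus_prob(1))
      show "sets (\<mu>s n) = sets borel" for n by (rule mus_prob(2))
      show "emeasure (\<mu>s n) X = 1" for n using mus_supp XO by simp
      show "emeasure (\<mu>s n) (skew fam -` A \<inter> X) = emeasure (\<mu>s n) A" if "A \<in> sets borel" for n A
        using mus_inv[OF that] XO by simp
      show "prob_space \<mu>" by (rule mu_prob(1))
      show "sets \<mu> = sets borel" by (rule mu_prob(2))
      show "emeasure \<mu> X = 1" using mu_supp XO by simp
      show "weak_star_conv \<mu>s \<mu>" by (rule conv)
    qed
  qed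
  have ls: "AE p in \<mu>. p \<in> X \<longrightarrow> (\<exists>L. L < - \<beta> \<and> (\<lambda>n. ln (cs n p) / real n) \<longlonglongrightarrow> L)"
    using lyap by eventually_elim (simp add: XO cs_def)
  have lu: "AE p in \<mu>. p \<in> X \<longrightarrow> (\<exists>L. L < - \<beta> \<and> (\<lambda>n. ln (cu n p) / real n) \<longlonglongrightarrow> L)"
    using lyap by eventually_elim (simp add: XO cu_def)
  show ?thesis using main_msys[OF ab ls lu] XO by simp
qed

end
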